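(* Let $T$ be a complete theory with monster model $\mathcal{U}$, $M\prec\mathcal{U}$ a small elementary submodel, $\mu\in\mathfrak{M}_x(\mathcal{U})$, $\nu\in\mathfrak{M}_y(\mathcal{U})$. If $\mu$ is finitely satisfiable in $M$ and $\mu\geq_{\mathbb{E},M}\nu$, then $\nu$ is finitely satisfiable in $M$. Moreover, if $\mu$ is finitely satisfiable and $\mu\geq_{\mathbb{E}}\nu$, then $\nu$ is finitely satisfiable.
   Context: For $C\subseteq\mathcal{U}$, $\mathcal{L}_x(C)$ is the Boolean algebra of formulas in $x$ with parameters from $C$ modulo $T$, embedded in $\mathcal{L}_{xy}(C)$ via $\varphi(x)\mapsto\varphi(x)\wedge y=y$; $\mathfrak{M}_x(C)$ is the set of finitely additive probability measures on $\mathcal{L}_x(C)$. For $\omega\in\mathfrak{M}_{xy}(C)$, $\pi_x(\omega)(\varphi(x))=\omega(\varphi(x)\wedge y=y)$ (similarly $\pi_y$); $\omega|_D$ is restriction. For small $A$, $\mu\geq_{\mathbb{E},A}\nu$ means there is $\lambda\in\mathfrak{M}_{xy}(A)$ with $\pi_x(\lambda)=\mu|_A$ such that every $\omega\in\mathfrak{M}_{xy}(\mathcal{U})$ with $\omega|_A=\lambda$ and $\pi_x(\omega)=\mu$ satisfies $\pi_y(\omega)=\nu$; $\mu\geq_{\mathbb{E}}\nu$ means this for some small $A$. A global measure $\mu$ is finitely satisfiable in $M$ if every $\varphi(x)\in\mathcal{L}_x(\mathcal{U})$ with $\mu(\varphi(x))>0$ is realized by some tuple from $M$; it is finitely satisfiable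 if finitely satisfiable in some small $M\prec\mathcal{U}$. *)

theory Defs
  imports Complex_Main
begin

text \<open>Terms and formulas over function symbols of type 'f and relation symbols of
type 'r (symbols are not given fixed arities: each symbol may be applied to any number
of arguments, which is harmless).\<close>

datatype 'f trm = Var nat | Fn 'f "'f trm list"

datatype ('f, 'r) fm =
    FF
  | Eq "'f trm" "'f trm"
  | Rel 'r "'f trm list"
  | Neg "('f, 'r) fm"
  | Conj "('f, 'r) fm" "('f, 'r) fm"
  | Ex nat "('f, 'r) fm"

record ('a, 'f, 'r) struc =
  univ :: "'a set"
  fnc  :: "'f \<Rightarrow> 'a list \<Rightarrow> 'a"
  rel  :: "'r \<Rightarrow> 'a list \<Rightarrow> bool"

fun evalt :: "('a, 'f, 'r) struc \<Rightarrow> (nat \<Rightarrow> 'a) \<Rightarrow> 'f trm \<Rightarrow> 'a" where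
  "evalt S e (Var i) = e i"
| "evalt S e (Fn f ts) = fnc S f (map (evalt S e) ts)"

fun fvt :: "'f trm \<Rightarrow> nat set" where
  "fvt (Var i) = {i}"
| "fvt (Fn f ts) = (\<Union>t\<in>set ts. fvt t)"

fun sat :: "('a, 'f, 'r) struc \<Rightarrow> ('f, 'r) fm \<Rightarrow> (nat \<Rightarrow> 'a) \<Rightarrow> bool" where
  "sat S FF e = False"
| "sat S (Eq s t) e = (evalt S e s = evalt S e t)"
| "sat S (Rel r ts) e = rel S r (map (evalt S e) ts)"
| "sat S (Neg \<phi>) e = (\<not> sat S \<phi> e)"
| "sat S (Conj \<phi> \<psi>) e = (sat S \<phi> e \<and> sat S \<psi> e)"
| "sat S (Ex i \<phi>) e = (\<exists>a\<in>univ S. sat S \<phi> (e(i := a)))"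

fun fv :: "('f, 'r) fm \<Rightarrow> nat set" where
  "fv FF = {}"
| "fv (Eq s t) = fvt s \<union> fvt t"
| "fv (Rel r ts) = (\<Union>t\<in>set ts. fvt t)"
| "fv (Neg \<phi>) = fv \<phi>"
| "fv (Conj \<phi> \<psi>) = fv \<phi> \<union> fv \<psi>"
| "fv (Ex i \<phi>) = fv \<phi> - {i}"

definition wf_struc :: "('a, 'f, 'r) struc \<Rightarrow> bool" where
  "wf_struc S \<longleftrightarrow> univ S \<noteq> {} \<and>
     (\<forall>f as. set as \<subseteq> univ S \<longrightarrow> fnc S f as \<in> univ S)"

definition elem_sub :: "'a set \<Rightarrow> ('a, 'f, 'r) struc \<Rightarrow> bool" where
  "elem_sub M S \<longleftrightarrow> M \<subseteq> univ S \<and> M \<noteq> {} \<and>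
     (\<forall>f as. set as \<subseteq> M \<longrightarrow> fnc S f as \<in> M) \<and>
     (\<forall>(\<phi> :: ('f, 'r) fm) e. (\<forall>i. e i \<in> M) \<longrightarrow>
        (sat (S\<lparr>univ := M\<rparr>) \<phi> e \<longleftrightarrow> sat S \<phi> e))"

definition automorphism :: "('a, 'f, 'r) struc \<Rightarrow> ('a \<Rightarrow> 'a) \<Rightarrow> bool" where
  "automorphism S \<sigma> \<longleftrightarrow> bij_betw \<sigma> (univ S) (univ S) \<and>
     (\<forall>f as. set as \<subseteq> univ S \<longrightarrow> \<sigma> (fnc S f as) = fnc S f (map \<sigma> as)) \<and>
     (\<forall>r as. set as \<subseteq> univ S \<longrightarrow> (rel S r as \<longleftrightarrow> rel S r (map \<sigma> as)))"

text \<open>Smallness is measured against a cardinal given as the cardinality of a set K.\<close>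
definition small :: "'k set \<Rightarrow> 'a set \<Rightarrow> bool" where
  "small K A \<longleftrightarrow> (card_of A, card_of K) \<in> ordLess"

text \<open>A 1-type over A: a set of formulas (given with a parameter assignment), whose free
variables other than 0 are sent into A.\<close>
definition saturated :: "'k set \<Rightarrow> ('a, 'f, 'r) struc \<Rightarrow> bool" where
  "saturated K S \<longleftrightarrow>
     (\<forall>A P. A \<subseteq> univ S \<longrightarrow> small K A \<longrightarrow>
        (\<forall>(\<phi> :: ('f, 'r) fm, e) \<in> P. \<forall>i\<in>fv \<phi>. i \<noteq> 0 \<longrightarrow> e i \<in> A) \<longrightarrow>
        (\<forall>F. F \<subseteq> P \<longrightarrow> finite F \<longrightarrow>
           (\<exists>a\<in>univ S. \<forall>(\<phi>, e)\<in>F. sat S \<phi> (e(0 := a)))) \<longrightarrow>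
        (\<exists>a\<in>univ S. \<forall>(\<phi>, e)\<in>P. sat S \<phi> (e(0 := a))))"

definition partial_elementary :: "('a, 'f, 'r) struc \<Rightarrow> 'a set \<Rightarrow> ('a \<Rightarrow> 'a) \<Rightarrow> bool" where
  "partial_elementary S A f \<longleftrightarrow> f ` A \<subseteq> univ S \<and>
     (\<forall>(\<phi> :: ('f, 'r) fm) e. (\<forall>i\<in>fv \<phi>. e i \<in> A) \<longrightarrow>
        (sat S \<phi> e \<longleftrightarrow> sat S \<phi> (f \<circ> e)))"

definition strongly_homogeneous :: "'k set \<Rightarrow> ('a, 'f, 'r) struc \<Rightarrow> bool" where
  "strongly_homogeneous K S \<longleftrightarrow>
     (\<forall>A f. A \<subseteq> univ S \<longrightarrow> small K A \<longrightarrow> partial_elementary S A f \<longrightarrow>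
        (\<exists>\<sigma>. automorphism S \<sigma> \<and> (\<forall>a\<in>A. \<sigma> a = f a)))"

text \<open>S is a monster model (of its complete theory T = Th(S)) with respect to the
cardinal |K|: |K| is infinite and exceeds the size of the language, and S is
|K|-saturated and strongly |K|-homogeneous.\<close>
definition monster :: "'k set \<Rightarrow> ('a, 'f, 'r) struc \<Rightarrow> bool" where
  "monster K S \<longleftrightarrow> wf_struc S \<and> infinite K \<and>
     small K (UNIV :: 'f set) \<and> small K (UNIV :: 'r set) \<and>
     saturated K S \<and> strongly_homogeneous K S"

definition tup :: "('a, 'f, 'r) struc \<Rightarrow> nat \<Rightarrow> 'a list set" where
  "tup S n = {a. length a = n \<and> set a \<subseteq> univ S}"

definition asg :: "nat \<Rightarrow> 'a list \<Rightarrow> (nat \<Rightarrow> 'a) \<Rightarrow> nat \<Rightarrow> 'a" where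
  "asg n a e i = (if i < n then a ! i else e i)"

text \<open>The Boolean algebra \<open>L_x(C)\<close> (x an n-tuple of variables, namely variables 0..n-1)
of formulas with parameters from C modulo T, realised as the algebra of C-definable
subsets of the monster model (two such formulas are equivalent modulo T iff they
define the same subset of the monster).\<close>
definition defsets :: "('a, 'f, 'r) struc \<Rightarrow> nat \<Rightarrow> 'a set \<Rightarrow> 'a list set set" where
  "defsets S n C =
     {{a \<in> tup S n. sat S \<phi> (asg n a e)} | (\<phi> :: ('f, 'r) fm) e.
        \<forall>i\<in>fv \<phi>. n \<le> i \<longrightarrow> e i \<in> C}"

text \<open>Finitely additive probability measures on \<open>L_x(C)\<close> (only the values on
definable sets are relevant).\<close>
definition keisler :: "('a, 'f, 'r) struc \<Rightarrow> nat \<Rightarrow> 'a set \<Rightarrow> ('a list set \<Rightarrow> real) \<Rightarrow> bool" where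
  "keisler S n C \<mu> \<longleftrightarrow>
     (\<forall>D\<in>defsets S n C. 0 \<le> \<mu> D) \<and> \<mu> (tup S n) = 1 \<and>
     (\<forall>D\<in>defsets S n C. \<forall>E\<in>defsets S n C. D \<inter> E = {} \<longrightarrow> \<mu> (D \<union> E) = \<mu> D + \<mu> E)"

definition pix :: "('a, 'f, 'r) struc \<Rightarrow> nat \<Rightarrow> nat \<Rightarrow> ('a list set \<Rightarrow> real) \<Rightarrow> 'a list set \<Rightarrow> real" where
  "pix S n m \<omega> D = \<omega> {a @ b | a b. a \<in> D \<and> b \<in> tup S m}"

definition piy :: "('a, 'f, 'r) struc \<Rightarrow> nat \<Rightarrow> nat \<Rightarrow> ('a list set \<Rightarrow> real) \<Rightarrow> 'a list set \<Rightarrow> real" where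
  "piy S n m \<omega> D = \<omega> {a @ b | a b. a \<in> tup S n \<and> b \<in> D}"

definition edom_at :: "('a, 'f, 'r) struc \<Rightarrow> nat \<Rightarrow> nat \<Rightarrow> 'a set \<Rightarrow>
    ('a list set \<Rightarrow> real) \<Rightarrow> ('a list set \<Rightarrow> real) \<Rightarrow> bool" where
  "edom_at S n m A \<mu> \<nu> \<longleftrightarrow>
     (\<exists>lam. keisler S (n + m) A lam \<and>
        (\<forall>D\<in>defsets S n A. pix S n m lam D = \<mu> D) \<and>
        (\<forall>\<omega>. keisler S (n + m) (univ S) \<omega> \<longrightarrow>
           (\<forall>D\<in>defsets S (n + m) A. \<omega> D = lam D) \<longrightarrow>
           (\<forall>D\<in>defsets S n (univ S). pix S n m \<omega> D = \<mu> D) \<longrightarrow>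
           (\<forall>D\<in>defsets S m (univ S). piy S n m \<omega> D = \<nu> D)))"

definition edom :: "'k set \<Rightarrow> ('a, 'f, 'r) struc \<Rightarrow> nat \<Rightarrow> nat \<Rightarrow>
    ('a list set \<Rightarrow> real) \<Rightarrow> ('a list set \<Rightarrow> real) \<Rightarrow> bool" where
  "edom K S n m \<mu> \<nu> \<longleftrightarrow> (\<exists>A. A \<subseteq> univ S \<and> small K A \<and> edom_at S n m A \<mu> \<nu>)"

definition fin_sat_in :: "('a, 'f, 'r) struc \<Rightarrow> nat \<Rightarrow> 'a set \<Rightarrow> ('a list set \<Rightarrow> real) \<Rightarrow> bool" where
  "fin_sat_in S n M \<mu> \<longleftrightarrow>
     (\<forall>D\<in>defsets S n (univ S). 0 < \<mu> D \<longrightarrow> (\<exists>a\<in>D. set a \<subseteq> M))"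

definition fin_sat :: "'k set \<Rightarrow> ('a, 'f, 'r) struc \<Rightarrow> nat \<Rightarrow> ('a list set \<Rightarrow> real) \<Rightarrow> bool" where
  "fin_sat K S n \<mu> \<longleftrightarrow> (\<exists>M. elem_sub M S \<and> small K M \<and> fin_sat_in S n M \<mu>)"

end

theory Submission
  imports Defs "HOL-Analysis.Analysis"
begin


fun rent :: "(nat \<Rightarrow> nat) \<Rightarrow> 'f trm \<Rightarrow> 'f trm" where
  "rent g (Var i) = Var (g i)"
| "rent g (Fn f ts) = Fn f (map (rent g) ts)"

fun renf :: "(nat \<Rightarrow> nat) \<Rightarrow> ('f,'r) fm \<Rightarrow> ('f,'r) fm" where
  "renf g FF = FF"
| "renf g (Eq s t) = Eq (rent g s) (rent g t)"
| "renf g (Rel r ts) = Rel r (map (rent g) ts)"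
| "renf g (Neg \<phi>) = Neg (renf g \<phi>)"
| "renf g (Conj \<phi> \<psi>) = Conj (renf g \<phi>) (renf g \<psi>)"
| "renf g (Ex i \<phi>) = Ex (g i) (renf g \<phi>)"

lemma evalt_ren: "evalt S e (rent g t) = evalt S (e \<circ> g) t"
  by (induction t) (auto cong: map_cong)

lemma fvt_ren: "fvt (rent g t) = g ` fvt t"
  by (induction t) auto

lemma sat_ren: "inj g \<Longrightarrow> sat S (renf g \<phi>) e = sat S \<phi> (e \<circ> g)"
proof (induction \<phi> arbitrary: e)
  case (Ex i \<phi>)
  have h: "(e(g i := a)) \<circ> g = (e \<circ> g)(i := a)" for a
    using Ex.prems by (auto simp: fun_eq_iff inj_eq)
  have h2: "sat S (renf g \<phi>) (e(g i := a)) = sat S \<phi> ((e \<circ> g)(i := a))" for a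
    using Ex.IH[OF Ex.prems, of "e(g i := a)"] unfolding h .
  show ?case by (simp only: renf.simps sat.simps h2)
qed (auto simp: evalt_ren comp_def)

lemma fv_ren: "inj g \<Longrightarrow> fv (renf g \<phi>) = g ` fv \<phi>"
proof (induction \<phi>)
  case (Ex i \<phi>)
  then show ?case by (auto simp: inj_eq)
qed (auto simp: fvt_ren)

lemma evalt_cong: "(\<forall>i\<in>fvt t. e i = e' i) \<Longrightarrow> evalt S e t = evalt S e' t"
  by (induction t) (auto cong: map_cong)

lemma sat_cong: "(\<forall>i\<in>fv \<phi>. e i = e' i) \<Longrightarrow> sat S \<phi> e = sat S \<phi> e'"
proof (induction \<phi> arbitrary: e e')
  case (Eq s t) then show ?case using evalt_cong[of s e e' S] evalt_cong[of t e e' S] by auto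
next
  case (Rel r ts)
  have "\<forall>x\<in>set ts. evalt S e x = evalt S e' x"
    using Rel evalt_cong[of _ e e' S] by auto
  then have "map (evalt S e) ts = map (evalt S e') ts"
    by (simp add: map_eq_conv)
  then show ?case by (simp only: sat.simps)
next
  case (Conj \<phi>1 \<phi>2)
  have "sat S \<phi>1 e = sat S \<phi>1 e'" "sat S \<phi>2 e = sat S \<phi>2 e'"
    using Conj by auto
  then show ?case by simp
next
  case (Ex i \<phi>)
  have "\<And>a. sat S \<phi> (e(i:=a)) = sat S \<phi> (e'(i:=a))"
    using Ex by (intro Ex.IH) auto
  then show ?case by simp
qed auto

lemma evalt_univ: "evalt (S\<lparr>univ := M\<rparr>) e t = evalt S e t"
  by (induction t) (auto cong: map_cong)

definition dset :: "('a,'f,'r) struc \<Rightarrow> nat \<Rightarrow> ('f,'r) fm \<Rightarrow> (nat \<Rightarrow> 'a) \<Rightarrow> 'a list set" where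
  "dset S k \<phi> e = {a \<in> tup S k. sat S \<phi> (asg k a e)}"

lemma defsets_iff: fixes S :: "('a,'f,'r) struc" shows "D \<in> defsets S k C \<longleftrightarrow> (\<exists>(\<phi>::('f,'r) fm) e. (\<forall>i\<in>fv \<phi>. k \<le> i \<longrightarrow> e i \<in> C) \<and> D = dset S k \<phi> e)"
  unfolding defsets_def dset_def by auto

lemma defsets_sub: "D \<in> defsets S k C \<Longrightarrow> D \<subseteq> tup S k"
  unfolding defsets_def by auto

lemma defsets_mono: "C \<subseteq> C' \<Longrightarrow> defsets S k C \<subseteq> defsets S k C'"
  unfolding defsets_def by blast

lemma defsets_tup: fixes S :: "('a,'f,'r) struc" shows "tup S k \<in> defsets S k C"
proof -
  have "tup S k = dset S k (Neg FF :: ('f,'r) fm) e" for e unfolding dset_def by auto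
  then show ?thesis unfolding defsets_iff by (metis emptyE fv.simps(1) fv.simps(4))
qed

lemma defsets_empty: fixes S :: "('a,'f,'r) struc" shows "{} \<in> defsets S k C"
proof -
  have "{} = dset S k (FF :: ('f,'r) fm) e" for e unfolding dset_def by auto
  then show ?thesis unfolding defsets_iff by (metis emptyE fv.simps(1))
qed

lemma defsets_compl: fixes S :: "('a,'f,'r) struc" shows "D \<in> defsets S k C \<Longrightarrow> tup S k - D \<in> defsets S k C"
proof -
  assume "D \<in> defsets S k C"
  then obtain \<phi> :: "('f,'r) fm" and e where h: "\<forall>i\<in>fv \<phi>. k \<le> i \<longrightarrow> e i \<in> C" "D = dset S k \<phi> e"
    unfolding defsets_iff by blast
  have "tup S k - D = dset S k (Neg \<phi>) e" using h(2) unfolding dset_def by auto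
  then show ?thesis unfolding defsets_iff using h(1) by (metis fv.simps(4))
qed

lemma defsets_int: fixes S :: "('a,'f,'r) struc" shows "D1 \<in> defsets S k C \<Longrightarrow> D2 \<in> defsets S k C \<Longrightarrow> D1 \<inter> D2 \<in> defsets S k C"
proof -
  assume "D1 \<in> defsets S k C" "D2 \<in> defsets S k C"
  then obtain \<phi>1 :: "('f,'r) fm" and e1 and \<phi>2 :: "('f,'r) fm" and e2 where
    h1: "\<forall>i\<in>fv \<phi>1. k \<le> i \<longrightarrow> e1 i \<in> C" "D1 = dset S k \<phi>1 e1" and
    h2: "\<forall>i\<in>fv \<phi>2. k \<le> i \<longrightarrow> e2 i \<in> C" "D2 = dset S k \<phi>2 e2"
    unfolding defsets_iff by blast
  define g1 where "g1 i = (if i < k then i else k + 2 * (i - k))" for i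
  define g2 where "g2 i = (if i < k then i else k + 2 * (i - k) + 1)" for i
  define e where "e j = (if even (j - k) then e1 (k + (j - k) div 2) else e2 (k + (j - k) div 2))" for j
  have i1: "inj g1" unfolding g1_def inj_def by auto
  have i2: "inj g2" unfolding g2_def inj_def by auto
  have c1: "asg k a e \<circ> g1 = asg k a e1" for a
    by (auto simp: fun_eq_iff asg_def g1_def e_def)
  have c2: "asg k a e \<circ> g2 = asg k a e2" for a
    by (auto simp: fun_eq_iff asg_def g2_def e_def)
  have "D1 \<inter> D2 = dset S k (Conj (renf g1 \<phi>1) (renf g2 \<phi>2)) e"
    using h1(2) h2(2) unfolding dset_def by (auto simp: sat_ren i1 i2 c1 c2)
  moreover have "\<forall>i\<in>fv (Conj (renf g1 \<phi>1) (renf g2 \<phi>2)). k \<le> i \<longrightarrow> e i \<in> C"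
  proof
    fix j assume "j \<in> fv (Conj (renf g1 \<phi>1) (renf g2 \<phi>2))"
    then consider i where "i \<in> fv \<phi>1" "j = g1 i" | i where "i \<in> fv \<phi>2" "j = g2 i"
      by (auto simp: fv_ren i1 i2)
    then show "k \<le> j \<longrightarrow> e j \<in> C"
    proof cases
      case 1 then show ?thesis using h1(1) by (auto simp: g1_def e_def)
    next
      case 2 then show ?thesis using h2(1) by (auto simp: g2_def e_def)
    qed
  qed
  ultimately show ?thesis unfolding defsets_iff by blast
qed


definition cylx :: "('a,'f,'r) struc \<Rightarrow> nat \<Rightarrow> 'a list set \<Rightarrow> 'a list set" where
  "cylx S m D = {a @ b | a b. a \<in> D \<and> b \<in> tup S m}"
definition cyly :: "('a,'f,'r) struc \<Rightarrow> nat \<Rightarrow> 'a list set \<Rightarrow> 'a list set" where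
  "cyly S n D = {a @ b | a b. a \<in> tup S n \<and> b \<in> D}"
definition prj :: "('a,'f,'r) struc \<Rightarrow> nat \<Rightarrow> nat \<Rightarrow> 'a list set \<Rightarrow> 'a list set" where
  "prj S n m D = {a \<in> tup S n. \<exists>b\<in>tup S m. a @ b \<in> D}"

lemma pix_cylx: "pix S n m \<omega> D = \<omega> (cylx S m D)"
  unfolding pix_def cylx_def by simp
lemma piy_cyly: "piy S n m \<omega> D = \<omega> (cyly S n D)"
  unfolding piy_def cyly_def by simp

lemma tup_append_iff: "c \<in> tup S (n + m) \<longleftrightarrow> (\<exists>a b. c = a @ b \<and> a \<in> tup S n \<and> b \<in> tup S m)"
proof
  assume "c \<in> tup S (n + m)"
  then show "\<exists>a b. c = a @ b \<and> a \<in> tup S n \<and> b \<in> tup S m"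
    unfolding tup_def
    by (intro exI[of _ "take n c"] exI[of _ "drop n c"]) (auto dest: in_set_takeD in_set_dropD)
qed (auto simp: tup_def)

lemma tup_len: "a \<in> tup S n \<Longrightarrow> length a = n" by (simp add: tup_def)

lemma append_tup_iff: "a \<in> tup S n \<Longrightarrow> a' \<in> tup S n \<Longrightarrow> (a @ b = a' @ b') \<longleftrightarrow> a = a' \<and> b = b'"
  by (simp add: tup_def)

lemma defsets_cylx:
  fixes S :: "('a,'f,'r) struc"
  assumes "D \<in> defsets S n C"
  shows "cylx S m D \<in> defsets S (n + m) C"
proof -
  obtain \<phi> :: "('f,'r) fm" and e where h: "\<forall>i\<in>fv \<phi>. n \<le> i \<longrightarrow> e i \<in> C" "D = dset S n \<phi> e"
    using assms unfolding defsets_iff by blast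
  define g where "g i = (if i < n then i else i + m)" for i
  define e' where "e' j = e (j - m)" for j
  have ig: "inj g" unfolding g_def inj_def by auto
  have c: "asg (n + m) c e' \<circ> g = asg n (take n c) e" if "length c = n + m" for c
    using that by (auto simp: fun_eq_iff asg_def g_def e'_def)
  have "cylx S m D = dset S (n + m) (renf g \<phi>) e'"
  proof safe
    fix x assume "x \<in> cylx S m D"
    then obtain a b where ab: "x = a @ b" "a \<in> D" "b \<in> tup S m" unfolding cylx_def by auto
    then have a: "a \<in> tup S n" "sat S \<phi> (asg n a e)" using h(2) unfolding dset_def by auto
    have "x \<in> tup S (n + m)" using ab a tup_append_iff by blast
    moreover have "take n x = a" using ab a by (simp add: tup_def)
    ultimately show "x \<in> dset S (n + m) (renf g \<phi>) e'"
      unfolding dset_def using a c[of x] by (simp add: sat_ren ig tup_def)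
  next
    fix x assume "x \<in> dset S (n + m) (renf g \<phi>) e'"
    then have x: "x \<in> tup S (n + m)" "sat S \<phi> (asg n (take n x) e)"
      unfolding dset_def using c[of x] by (auto simp: sat_ren ig tup_def)
    then obtain a b where ab: "x = a @ b" "a \<in> tup S n" "b \<in> tup S m" using tup_append_iff by blast
    then have "take n x = a" by (simp add: tup_def)
    then have "a \<in> D" using h(2) x ab unfolding dset_def by auto
    then show "x \<in> cylx S m D" using ab unfolding cylx_def by auto
  qed
  moreover have "\<forall>i\<in>fv (renf g \<phi>). n + m \<le> i \<longrightarrow> e' i \<in> C"
    using h(1) by (auto simp: fv_ren ig g_def e'_def)
  ultimately show ?thesis unfolding defsets_iff by blast
qed

lemma defsets_cyly:
  fixes S :: "('a,'f,'r) struc"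
  assumes "D \<in> defsets S m C"
  shows "cyly S n D \<in> defsets S (n + m) C"
proof -
  obtain \<phi> :: "('f,'r) fm" and e where h: "\<forall>i\<in>fv \<phi>. m \<le> i \<longrightarrow> e i \<in> C" "D = dset S m \<phi> e"
    using assms unfolding defsets_iff by blast
  define g where "g i = i + n" for i
  define e' where "e' j = e (j - n)" for j
  have ig: "inj g" unfolding g_def inj_def by auto
  have c: "asg (n + m) c e' \<circ> g = asg m (drop n c) e" if "length c = n + m" for c
    using that by (auto simp: fun_eq_iff asg_def g_def e'_def add.commute)
  have "cyly S n D = dset S (n + m) (renf g \<phi>) e'"
  proof safe
    fix x assume "x \<in> cyly S n D"
    then obtain a b where ab: "x = a @ b" "b \<in> D" "a \<in> tup S n" unfolding cyly_def by auto
    then have b: "b \<in> tup S m" "sat S \<phi> (asg m b e)" using h(2) unfolding dset_def by auto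
    have "x \<in> tup S (n + m)" using ab b tup_append_iff by blast
    moreover have "drop n x = b" using ab by (simp add: tup_def)
    ultimately show "x \<in> dset S (n + m) (renf g \<phi>) e'"
      unfolding dset_def using b c[of x] by (simp add: sat_ren ig tup_def)
  next
    fix x assume "x \<in> dset S (n + m) (renf g \<phi>) e'"
    then have x: "x \<in> tup S (n + m)" "sat S \<phi> (asg m (drop n x) e)"
      unfolding dset_def using c[of x] by (auto simp: sat_ren ig tup_def)
    then obtain a b where ab: "x = a @ b" "a \<in> tup S n" "b \<in> tup S m" using tup_append_iff by blast
    then have "drop n x = b" by (simp add: tup_def)
    then have "b \<in> D" using h(2) x ab unfolding dset_def by auto
    then show "x \<in> cyly S n D" using ab unfolding cyly_def by auto
  qed
  moreover have "\<forall>i\<in>fv (renf g \<phi>). n + m \<le> i \<longrightarrow> e' i \<in> C"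
    using h(1) by (auto simp: fv_ren ig g_def e'_def)
  ultimately show ?thesis unfolding defsets_iff by blast
qed

fun exs :: "nat list \<Rightarrow> ('f,'r) fm \<Rightarrow> ('f,'r) fm" where
  "exs [] \<phi> = \<phi>"
| "exs (i # is) \<phi> = Ex i (exs is \<phi>)"

lemma fv_exs: "fv (exs is \<phi>) = fv \<phi> - set is"
  by (induction "is") auto

lemma tup_Suc: "b' \<in> tup S (Suc m) \<longleftrightarrow> (\<exists>a b. b' = a # b \<and> a \<in> univ S \<and> b \<in> tup S m)"
  unfolding tup_def by (cases b') auto

lemma sat_exs:
  "sat S (exs [k..<k+m] \<phi>) e \<longleftrightarrow>
     (\<exists>b\<in>tup S m. sat S \<phi> (\<lambda>i. if k \<le> i \<and> i < k + m then b ! (i - k) else e i))"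
proof (induction m arbitrary: k e)
  case 0
  have "tup S 0 = {[]}" unfolding tup_def by auto
  moreover have "(\<lambda>i. if k \<le> i \<and> i < k + 0 then b ! (i - k) else e i) = e" for b :: "'a list"
    by (rule ext) auto
  ultimately show ?case by simp
next
  case (Suc m)
  have up: "[k..<k + Suc m] = k # [Suc k..<Suc k + m]"
    by (simp add: upt_conv_Cons)
  have fe: "(\<lambda>i. if Suc k \<le> i \<and> i < Suc k + m then b ! (i - Suc k) else (e(k := a)) i)
      = (\<lambda>i. if k \<le> i \<and> i < k + Suc m then (a # b) ! (i - k) else e i)" for a b
  proof
    fix i show "(if Suc k \<le> i \<and> i < Suc k + m then b ! (i - Suc k) else (e(k := a)) i)
      = (if k \<le> i \<and> i < k + Suc m then (a # b) ! (i - k) else e i)"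
      by (auto simp: nth_Cons' diff_diff_left)
  qed
  have "sat S (exs [k..<k + Suc m] \<phi>) e \<longleftrightarrow>
      (\<exists>a\<in>univ S. \<exists>b\<in>tup S m. sat S \<phi> (\<lambda>i. if k \<le> i \<and> i < k + Suc m then (a # b) ! (i - k) else e i))"
    unfolding up using Suc.IH[of "Suc k"] fe by simp
  also have "\<dots> \<longleftrightarrow> (\<exists>b'\<in>tup S (Suc m). sat S \<phi> (\<lambda>i. if k \<le> i \<and> i < k + Suc m then b' ! (i - k) else e i))"
    unfolding Bex_def tup_Suc by blast
  finally show ?case .
qed

lemma defsets_prj:
  fixes S :: "('a,'f,'r) struc"
  assumes "D \<in> defsets S (n + m) C"
  shows "prj S n m D \<in> defsets S n C"
proof -
  obtain \<phi> :: "('f,'r) fm" and e where h: "\<forall>i\<in>fv \<phi>. n + m \<le> i \<longrightarrow> e i \<in> C" "D = dset S (n + m) \<phi> e"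
    using assms unfolding defsets_iff by blast
  have fe: "(\<lambda>i. if n \<le> i \<and> i < n + m then b ! (i - n) else asg n a e i) = asg (n + m) (a @ b) e"
    if "length a = n" for a b :: "'a list"
    using that by (auto simp: fun_eq_iff asg_def nth_append)
  have "prj S n m D = dset S n (exs [n..<n+m] \<phi>) e"
  proof safe
    fix x assume "x \<in> prj S n m D"
    then obtain b where "x \<in> tup S n" "b \<in> tup S m" "x @ b \<in> D" unfolding prj_def by auto
    then show "x \<in> dset S n (exs [n..<n + m] \<phi>) e"
      using h(2) fe[of x b] unfolding dset_def sat_exs by (auto simp: tup_def)
  next
    fix x assume "x \<in> dset S n (exs [n..<n + m] \<phi>) e"
    then obtain b where "x \<in> tup S n" "b \<in> tup S m" "sat S \<phi> (asg (n + m) (x @ b) e)"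
      using fe[of x] unfolding dset_def sat_exs by (auto simp: tup_def)
    moreover then have "x @ b \<in> tup S (n + m)" using tup_append_iff by blast
    ultimately show "x \<in> prj S n m D" using h(2) unfolding prj_def dset_def by auto
  qed
  moreover have "\<forall>i\<in>fv (exs [n..<n+m] \<phi>). n \<le> i \<longrightarrow> e i \<in> C"
    using h(1) by (auto simp: fv_exs)
  ultimately show ?thesis unfolding defsets_iff by blast
qed

lemma elem_wit:
  fixes S :: "('a,'f,'r) struc"
  assumes em: "elem_sub M S" and AM: "A \<subseteq> M" and D: "D \<in> defsets S (n + m) A"
    and a: "a \<in> tup S n" "set a \<subseteq> M" and b: "b \<in> tup S m" "a @ b \<in> D"
  shows "\<exists>b'\<in>tup S m. set b' \<subseteq> M \<and> a @ b' \<in> D"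
proof -
  obtain \<phi> :: "('f,'r) fm" and e where h: "\<forall>i\<in>fv \<phi>. n + m \<le> i \<longrightarrow> e i \<in> A" "D = dset S (n + m) \<phi> e"
    using D unfolding defsets_iff by blast
  from em have MU: "M \<subseteq> univ S" "M \<noteq> {}" unfolding elem_sub_def by auto
  then obtain m0 where m0: "m0 \<in> M" by auto
  define e2 where "e2 i = (if i \<in> fv \<phi> \<and> n + m \<le> i then e i else m0)" for i
  have e2M: "e2 i \<in> M" for i using h(1) AM m0 unfolding e2_def by auto
  have same: "sat S \<phi> (asg (n + m) c e) = sat S \<phi> (asg (n + m) c e2)" for c
    by (rule sat_cong) (auto simp: asg_def e2_def)
  have D2: "D = dset S (n + m) \<phi> e2" using h(2) same unfolding dset_def by auto
  have fe: "(\<lambda>i. if n \<le> i \<and> i < n + m then b ! (i - n) else asg n a e2 i) = asg (n + m) (a @ b) e2"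
    if "length a = n" for a b :: "'a list"
    using that by (auto simp: fun_eq_iff asg_def nth_append)
  have la: "length a = n" using a by (simp add: tup_def)
  have "sat S (exs [n..<n+m] \<phi>) (asg n a e2)"
    unfolding sat_exs fe[OF la] using b D2 unfolding dset_def by auto
  moreover have aM: "\<forall>i. asg n a e2 i \<in> M"
    using a e2M la by (auto simp: asg_def)
  ultimately have "sat (S\<lparr>univ := M\<rparr>) (exs [n..<n+m] \<phi>) (asg n a e2)"
    using em unfolding elem_sub_def by blast
  then obtain b' where b': "b' \<in> tup (S\<lparr>univ := M\<rparr>) m" "sat (S\<lparr>univ := M\<rparr>) \<phi> (asg (n + m) (a @ b') e2)"
    unfolding sat_exs fe[OF la] by auto
  have b'M: "set b' \<subseteq> M" "length b' = m" using b'(1) by (auto simp: tup_def)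
  have "\<forall>i. asg (n + m) (a @ b') e2 i \<in> M"
    using a e2M la b'M by (auto simp: asg_def nth_append dest!: nth_mem)
  then have "sat S \<phi> (asg (n + m) (a @ b') e2)"
    using em b'(2) unfolding elem_sub_def by blast
  moreover have "b' \<in> tup S m" using b'M MU by (auto simp: tup_def)
  moreover then have "a @ b' \<in> tup S (n + m)" using a tup_append_iff by blast
  ultimately show ?thesis using D2 b'M unfolding dset_def by auto
qed


definition alg :: "'b set \<Rightarrow> 'b set set \<Rightarrow> bool" where
  "alg U \<A> \<longleftrightarrow> (\<forall>X\<in>\<A>. X \<subseteq> U) \<and> U \<in> \<A> \<and> (\<forall>X\<in>\<A>. U - X \<in> \<A>) \<and> (\<forall>X\<in>\<A>. \<forall>Y\<in>\<A>. X \<inter> Y \<in> \<A>)"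

definition fam :: "'b set \<Rightarrow> 'b set set \<Rightarrow> ('b set \<Rightarrow> real) \<Rightarrow> bool" where
  "fam U \<A> l \<longleftrightarrow> (\<forall>D\<in>\<A>. 0 \<le> l D) \<and> l U = 1 \<and>
     (\<forall>D\<in>\<A>. \<forall>E\<in>\<A>. D \<inter> E = {} \<longrightarrow> l (D \<union> E) = l D + l E)"

lemma keisler_fam: "keisler S k C l \<longleftrightarrow> fam (tup S k) (defsets S k C) l"
  unfolding keisler_def fam_def by simp

lemma alg_defsets: fixes S :: "('a,'f,'r) struc" shows "alg (tup S k) (defsets S k C)"
  unfolding alg_def
  by (intro conjI ballI defsets_tup defsets_compl defsets_int defsets_sub) auto

lemma alg_sub: "alg U \<A> \<Longrightarrow> X \<in> \<A> \<Longrightarrow> X \<subseteq> U" unfolding alg_def by blast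
lemma alg_U: "alg U \<A> \<Longrightarrow> U \<in> \<A>" unfolding alg_def by blast
lemma alg_compl: "alg U \<A> \<Longrightarrow> X \<in> \<A> \<Longrightarrow> U - X \<in> \<A>" unfolding alg_def by blast
lemma alg_int: "alg U \<A> \<Longrightarrow> X \<in> \<A> \<Longrightarrow> Y \<in> \<A> \<Longrightarrow> X \<inter> Y \<in> \<A>" unfolding alg_def by blast
lemma alg_empty: "alg U \<A> \<Longrightarrow> {} \<in> \<A>"
  using alg_compl[of U \<A> U] alg_U[of U \<A>] by simp
lemma alg_un: assumes "alg U \<A>" "X \<in> \<A>" "Y \<in> \<A>" shows "X \<union> Y \<in> \<A>"
proof -
  have "X \<union> Y = U - ((U - X) \<inter> (U - Y))" using assms alg_sub by blast
  then show ?thesis using assms alg_compl alg_int by metis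
qed
lemma alg_diff: assumes "alg U \<A>" "X \<in> \<A>" "Y \<in> \<A>" shows "X - Y \<in> \<A>"
proof -
  have "X - Y = X \<inter> (U - Y)" using assms alg_sub by blast
  then show ?thesis using assms alg_compl alg_int by metis
qed

lemma alg_Inter: assumes "alg U \<A>" "finite G" "G \<subseteq> \<A>" shows "U \<inter> \<Inter>G \<in> \<A>"
  using assms(2,3)
proof (induction G rule: finite_induct)
  case empty then show ?case using assms(1) alg_U by simp
next
  case (insert x F)
  have "U \<inter> \<Inter>(insert x F) = x \<inter> (U \<inter> \<Inter>F)" by auto
  then show ?case using insert assms(1) alg_int by auto
qed

lemma alg_UN: assumes "alg U \<A>" "finite I" "\<forall>i\<in>I. f i \<in> \<A>" shows "(\<Union>i\<in>I. f i) \<in> \<A>"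
  using assms(2,3)
proof (induction I rule: finite_induct)
  case empty then show ?case using assms(1) alg_empty by simp
next
  case (insert x F) then show ?case using assms(1) alg_un by auto
qed

lemma fam_nonneg: "fam U \<A> l \<Longrightarrow> D \<in> \<A> \<Longrightarrow> 0 \<le> l D" unfolding fam_def by blast
lemma fam_U: "fam U \<A> l \<Longrightarrow> l U = 1" unfolding fam_def by blast
lemma fam_add: "fam U \<A> l \<Longrightarrow> D \<in> \<A> \<Longrightarrow> E \<in> \<A> \<Longrightarrow> D \<inter> E = {} \<Longrightarrow> l (D \<union> E) = l D + l E"
  unfolding fam_def by blast
lemma fam_empty: assumes "alg U \<A>" "fam U \<A> l" shows "l {} = 0"
  using fam_add[OF assms(2), of "{}" "{}"] alg_empty[OF assms(1)] by simp

lemma fam_sum: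
  assumes "alg U \<A>" "fam U \<A> l" "finite I" "\<forall>i\<in>I. f i \<in> \<A>"
    "\<forall>i\<in>I. \<forall>j\<in>I. i \<noteq> j \<longrightarrow> f i \<inter> f j = {}"
  shows "l (\<Union>i\<in>I. f i) = (\<Sum>i\<in>I. l (f i))"
  using assms(3-5)
proof (induction I rule: finite_induct)
  case empty then show ?case using fam_empty[OF assms(1,2)] by simp
next
  case (insert x F)
  have "(\<Union>i\<in>insert x F. f i) = f x \<union> (\<Union>i\<in>F. f i)" by auto
  moreover have "(\<Union>i\<in>F. f i) \<in> \<A>" using alg_UN[OF assms(1)] insert by auto
  moreover have "\<forall>i\<in>F. f x \<inter> f i = {}" using insert.prems insert.hyps(2) by (metis insertCI)
  then have "f x \<inter> (\<Union>i\<in>F. f i) = {}" by blast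
  ultimately show ?case using fam_add[OF assms(2)] insert by simp
qed

lemma fam_mono: assumes "alg U \<A>" "fam U \<A> l" "X \<in> \<A>" "Y \<in> \<A>" "X \<subseteq> Y" shows "l X \<le> l Y"
proof -
  have "Y = X \<union> (Y - X)" using assms by blast
  then have "l Y = l X + l (Y - X)"
    using fam_add[OF assms(2) assms(3) alg_diff[OF assms(1,4,3)]] by auto
  then show ?thesis using fam_nonneg[OF assms(2) alg_diff[OF assms(1,4,3)]] by simp
qed

definition atm :: "'b set \<Rightarrow> 'b set set \<Rightarrow> 'b \<Rightarrow> 'b set" where
  "atm U F x = {y \<in> U. \<forall>X\<in>F. y \<in> X \<longleftrightarrow> x \<in> X}"

definition atoms :: "'b set \<Rightarrow> 'b set set \<Rightarrow> 'b set set" where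
  "atoms U F = atm U F ` U"

lemma atm_self: "x \<in> U \<Longrightarrow> x \<in> atm U F x" unfolding atm_def by auto

lemma atoms_ne: "a \<in> atoms U F \<Longrightarrow> a \<noteq> {}"
  unfolding atoms_def using atm_self by (metis empty_iff imageE)

lemma atoms_sub: "a \<in> atoms U F \<Longrightarrow> a \<subseteq> U"
  unfolding atoms_def atm_def by auto

lemma atoms_finite: assumes "finite F" shows "finite (atoms U F)"
proof -
  have "atoms U F \<subseteq> (\<lambda>G. {y \<in> U. \<forall>X\<in>F. y \<in> X \<longleftrightarrow> X \<in> G}) ` Pow F"
  proof
    fix a assume "a \<in> atoms U F"
    then obtain x where "a = atm U F x" unfolding atoms_def by blast
    then have "a = (\<lambda>G. {y \<in> U. \<forall>X\<in>F. y \<in> X \<longleftrightarrow> X \<in> G}) {X\<in>F. x \<in> X}"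
      unfolding atm_def by auto
    then show "a \<in> (\<lambda>G. {y \<in> U. \<forall>X\<in>F. y \<in> X \<longleftrightarrow> X \<in> G}) ` Pow F" by blast
  qed
  then show ?thesis by (rule finite_subset) (use assms in auto)
qed

lemma atoms_disj: "a \<in> atoms U F \<Longrightarrow> b \<in> atoms U F \<Longrightarrow> a \<noteq> b \<Longrightarrow> a \<inter> b = {}"
  unfolding atoms_def atm_def by auto

lemma atoms_cover: "\<Union>(atoms U F) = U"
  unfolding atoms_def using atm_self by (auto simp: atm_def)

lemma atoms_decide: "a \<in> atoms U F \<Longrightarrow> X \<in> F \<Longrightarrow> a \<subseteq> X \<or> a \<inter> X = {}"
  unfolding atoms_def atm_def by auto

lemma atoms_decide2: "a \<in> atoms U F \<Longrightarrow> X \<in> F \<Longrightarrow> a \<inter> X \<noteq> {} \<Longrightarrow> a \<subseteq> X"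
  using atoms_decide by blast

lemma atoms_union: assumes "X \<in> F" "X \<subseteq> U" shows "X = \<Union>{a \<in> atoms U F. a \<subseteq> X}"
proof
  show "X \<subseteq> \<Union>{a \<in> atoms U F. a \<subseteq> X}"
  proof
    fix x assume "x \<in> X"
    then have "x \<in> atm U F x" "atm U F x \<subseteq> X" "atm U F x \<in> atoms U F"
      using assms atm_self unfolding atoms_def atm_def by auto
    then show "x \<in> \<Union>{a \<in> atoms U F. a \<subseteq> X}" by blast
  qed
qed auto

lemma atoms_alg: assumes "alg U \<A>" "finite F" "F \<subseteq> \<A>" shows "atoms U F \<subseteq> \<A>"
proof
  fix a assume "a \<in> atoms U F"
  then obtain x where x: "x \<in> U" "a = atm U F x" unfolding atoms_def by auto
  have "a = U \<inter> \<Inter>((\<lambda>X. if x \<in> X then X else U - X) ` F)"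
    using x unfolding atm_def by auto
  moreover have "(\<lambda>X. if x \<in> X then X else U - X) ` F \<subseteq> \<A>"
    using assms alg_compl by auto
  ultimately show "a \<in> \<A>" using alg_Inter[OF assms(1)] assms(2) by auto
qed

lemma fam_atoms_sum:
  assumes "alg U \<A>" "fam U \<A> l" "finite F" "F \<subseteq> \<A>" "X \<in> F"
  shows "l X = (\<Sum>a\<in>{a \<in> atoms U F. a \<subseteq> X}. l a)"
proof -
  have "X = (\<Union>a\<in>{a \<in> atoms U F. a \<subseteq> X}. a)"
    using atoms_union[OF assms(5)] alg_sub[OF assms(1)] assms(4,5) by auto
  moreover have "l (\<Union>a\<in>{a \<in> atoms U F. a \<subseteq> X}. a) = (\<Sum>a\<in>{a \<in> atoms U F. a \<subseteq> X}. l a)"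
    apply (rule fam_sum[OF assms(1,2)])
    subgoal using atoms_finite[OF assms(3)] by auto
    subgoal using atoms_alg[OF assms(1,3,4)] by auto
    subgoal using atoms_disj[of _ U F] by blast
    done
  ultimately show ?thesis by simp
qed

definition dirac :: "'i set \<Rightarrow> ('i \<Rightarrow> real) \<Rightarrow> ('i \<Rightarrow> 'b) \<Rightarrow> 'b set \<Rightarrow> real" where
  "dirac I w c Z = (\<Sum>i\<in>I. if c i \<in> Z then w i else 0)"

lemma dirac_add: "Z1 \<inter> Z2 = {} \<Longrightarrow> dirac I w c (Z1 \<union> Z2) = dirac I w c Z1 + dirac I w c Z2"
  unfolding dirac_def by (auto simp: sum.distrib[symmetric] intro!: sum.cong)

lemma dirac_restr: "\<forall>i\<in>I. c i \<in> MX \<Longrightarrow> dirac I w c Z = dirac I w c (Z \<inter> MX)"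
  unfolding dirac_def by (auto intro!: sum.cong)

lemma dirac_range: "\<forall>i\<in>I. 0 \<le> w i \<Longrightarrow> sum w I = 1 \<Longrightarrow> dirac I w c Z \<in> {0..1}"
proof -
  assume a: "\<forall>i\<in>I. 0 \<le> w i" "sum w I = 1"
  have "dirac I w c Z \<ge> 0" unfolding dirac_def using a by (auto intro: sum_nonneg)
  moreover have "dirac I w c Z \<le> sum w I" unfolding dirac_def
    by (rule sum_mono) (use a in auto)
  ultimately show ?thesis using a by auto
qed

lemma dirac_all: "\<forall>i\<in>I. c i \<in> Z \<Longrightarrow> dirac I w c Z = sum w I"
  unfolding dirac_def by (auto intro!: sum.cong)


locale amal =
  fixes S :: "('a,'f,'r) struc" and M A :: "'a set" and n m :: nat
    and lam mu :: "'a list set \<Rightarrow> real"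
  assumes em: "elem_sub M S" and AM: "A \<subseteq> M"
    and lamk: "keisler S (n + m) A lam"
    and marg: "\<forall>D\<in>defsets S n A. pix S n m lam D = mu D"
    and muk: "keisler S n (univ S) mu"
    and fs: "fin_sat_in S n M mu"
begin

abbreviation "X \<equiv> tup S (n + m)"
abbreviation "Y \<equiv> tup S n"
abbreviation "AA \<equiv> defsets S (n + m) A"
abbreviation "QQ \<equiv> defsets S n A"
abbreviation "BB \<equiv> defsets S n (univ S)"
abbreviation "cyl \<equiv> cylx S m"
abbreviation "pj \<equiv> prj S n m"

lemma MU: "M \<subseteq> univ S" "M \<noteq> {}" using em unfolding elem_sub_def by auto
lemma AU: "A \<subseteq> univ S" using AM MU by auto

lemma algA: "alg X AA" by (rule alg_defsets)
lemma algQ: "alg Y QQ" by (rule alg_defsets)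
lemma algB: "alg Y BB" by (rule alg_defsets)
lemma QB: "QQ \<subseteq> BB" using defsets_mono[OF AU] by blast
lemma famL: "fam X AA lam" using lamk keisler_fam by blast
lemma famM: "fam Y BB mu" using muk keisler_fam by blast

lemma cyl_A: "q \<in> QQ \<Longrightarrow> cyl q \<in> AA" by (rule defsets_cylx)
lemma lam_cyl: "q \<in> QQ \<Longrightarrow> lam (cyl q) = mu q" using marg pix_cylx by metis
lemma pj_Q: "p \<in> AA \<Longrightarrow> pj p \<in> QQ" by (rule defsets_prj)

lemma mem_cyl: "a \<in> Y \<Longrightarrow> b \<in> tup S m \<Longrightarrow> D \<subseteq> Y \<Longrightarrow> a @ b \<in> cyl D \<longleftrightarrow> a \<in> D"
  unfolding cylx_def by (auto simp: tup_def)

lemma cyl_int: assumes "q \<subseteq> Y" "q' \<subseteq> Y" shows "cyl q \<inter> cyl q' = cyl (q \<inter> q')"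
proof (intro equalityI subsetI)
  fix x assume "x \<in> cyl q \<inter> cyl q'"
  then obtain a b a' b' where h: "x = a @ b" "a \<in> q" "b \<in> tup S m" "x = a' @ b'" "a' \<in> q'" "b' \<in> tup S m"
    unfolding cylx_def by blast
  moreover have "length a = n" "length a' = n" using h assms by (auto simp: tup_def)
  ultimately have "a = a'" by (metis append_eq_append_conv)
  then show "x \<in> cyl (q \<inter> q')" using h unfolding cylx_def by blast
next
  fix x assume "x \<in> cyl (q \<inter> q')"
  then show "x \<in> cyl q \<inter> cyl q'" unfolding cylx_def by blast
qed

lemma cyl_empty: "cyl {} = {}" unfolding cylx_def by auto

lemma cyl_sub: "cyl q \<subseteq> cyl q'" if "q \<subseteq> q'" using that unfolding cylx_def by auto

lemma sub_cyl_pj: "p \<subseteq> X \<Longrightarrow> p \<subseteq> cyl (pj p)"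
proof
  fix c assume "p \<subseteq> X" "c \<in> p"
  then obtain a b where "c = a @ b" "a \<in> Y" "b \<in> tup S m" using tup_append_iff by blast
  then show "c \<in> cyl (pj p)" using \<open>c \<in> p\<close> unfolding cylx_def prj_def by auto
qed

lemma fam_sum_disj:
  assumes "alg U F" "fam U F l" "finite I" "\<forall>i\<in>I. f i \<in> F" "\<forall>i\<in>I. \<forall>j\<in>I. i \<noteq> j \<longrightarrow> f i \<inter> f j = {}"
    "(\<Union>i\<in>I. f i) = Z"
  shows "(\<Sum>i\<in>I. l (f i)) = l Z"
  using fam_sum[OF assms(1-5)] assms(6) by simp

lemma fin_step:
  assumes FA: "finite FA0" "FA0 \<subseteq> AA" and FB: "finite FB" "FB \<subseteq> BB"
  shows "\<exists>(I :: ('a list set \<times> 'a list set) set) w c. finite I \<and>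
     (\<forall>i\<in>I. 0 \<le> w i \<and> c i \<in> X \<and> set (c i) \<subseteq> M) \<and> sum w I = 1 \<and>
     (\<forall>\<alpha>\<in>FA0. dirac I w c \<alpha> = lam \<alpha>) \<and> (\<forall>D\<in>FB. dirac I w c (cyl D) = mu D)"
proof -
  define FA where "FA = insert X FA0"
  have FAf: "finite FA" "FA \<subseteq> AA" "X \<in> FA" using FA alg_U[OF algA] unfolding FA_def by auto
  define P where "P = atoms X FA"
  have Pf: "finite P" unfolding P_def using atoms_finite FAf by blast
  have PA: "P \<subseteq> AA" unfolding P_def using atoms_alg[OF algA FAf(1,2)] .
  have PX: "p \<subseteq> X" if "p \<in> P" for p using that atoms_sub unfolding P_def by blast
  have Pne: "p \<noteq> {}" if "p \<in> P" for p using that atoms_ne unfolding P_def by blast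
  have Pdisj: "p \<inter> p' = {}" if "p \<in> P" "p' \<in> P" "p \<noteq> p'" for p p'
    using that atoms_disj unfolding P_def by blast
  have Pcov: "\<Union>P = X" unfolding P_def by (rule atoms_cover)
  define Q where "Q = atoms Y (pj ` P)"
  have pjPQ: "pj ` P \<subseteq> QQ" using PA pj_Q by blast
  have Qf: "finite Q" unfolding Q_def using atoms_finite Pf by blast
  have QQQ: "Q \<subseteq> QQ" unfolding Q_def using atoms_alg[OF algQ _ pjPQ] Pf by blast
  have QY: "q \<subseteq> Y" if "q \<in> Q" for q using that atoms_sub unfolding Q_def by blast
  have Qdisj: "q \<inter> q' = {}" if "q \<in> Q" "q' \<in> Q" "q \<noteq> q'" for q q'
    using that atoms_disj unfolding Q_def by blast
  have Qcov: "\<Union>Q = Y" unfolding Q_def by (rule atoms_cover)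
  have Qdec: "q \<subseteq> pj p \<or> q \<inter> pj p = {}" if "q \<in> Q" "p \<in> P" for q p
    using that atoms_decide unfolding Q_def by blast
  define R where "R = atoms Y (FB \<union> Q)"
  have FBQ: "FB \<union> Q \<subseteq> BB" using FB QQQ QB by blast
  have Rf: "finite R" unfolding R_def using atoms_finite FB Qf by blast
  have RB: "R \<subseteq> BB" unfolding R_def using atoms_alg[OF algB _ FBQ] FB Qf by blast
  have RY: "r \<subseteq> Y" if "r \<in> R" for r using that atoms_sub unfolding R_def by blast
  have Rne: "r \<noteq> {}" if "r \<in> R" for r using that atoms_ne unfolding R_def by blast
  have Rdec: "r \<subseteq> q \<or> r \<inter> q = {}" if "r \<in> R" "q \<in> FB \<union> Q" for r q
    using that atoms_decide unfolding R_def by blast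
  define qr where "qr r = (THE q. q \<in> Q \<and> r \<subseteq> q)" for r
  have qr_uniq: "qr r = q" if "r \<in> R" "q \<in> Q" "r \<subseteq> q" for r q
  proof -
    have u: "q' = q" if "q' \<in> Q \<and> r \<subseteq> q'" for q'
      using Qdisj[of q q'] that \<open>q \<in> Q\<close> \<open>r \<subseteq> q\<close> Rne[OF \<open>r \<in> R\<close>] by blast
    have "q \<in> Q \<and> r \<subseteq> q" using that by blast
    then show ?thesis unfolding qr_def using u by (rule the_equality)
  qed
  have qr_ex: "qr r \<in> Q \<and> r \<subseteq> qr r" if rR: "r \<in> R" for r
  proof -
    obtain y where "y \<in> r" using Rne[OF rR] by blast
    then have "y \<in> Y" using RY[OF rR] by blast
    then obtain q where q: "q \<in> Q" "y \<in> q" using Qcov by blast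
    then have "r \<subseteq> q" using Rdec[OF rR, of q] \<open>y \<in> r\<close> by blast
    then show ?thesis using qr_uniq[OF rR q(1)] q by simp
  qed
  have pcq: "p \<inter> cyl q \<in> AA" if "p \<in> P" "q \<in> Q" for p q
    using alg_int[OF algA] PA cyl_A QQQ that by blast
  have pcq0: "p \<inter> cyl q = {}" if "p \<in> P" "q \<in> Q" "q \<inter> pj p = {}" for p q
  proof -
    have "p \<inter> cyl q \<subseteq> cyl (pj p) \<inter> cyl q" using sub_cyl_pj[OF PX[OF that(1)]] by blast
    also have "\<dots> = cyl (pj p \<inter> q)" using cyl_int[of "pj p" q] QY[OF that(2)] unfolding prj_def by blast
    finally show ?thesis using that(3) cyl_empty by (simp add: Int_commute)
  qed
  have muq_lam: "lam (p \<inter> cyl q) \<le> mu q" if "p \<in> P" "q \<in> Q" for p q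
  proof -
    have "lam (p \<inter> cyl q) \<le> lam (cyl q)"
      using fam_mono[OF algA famL pcq[OF that] cyl_A] that QQQ by blast
    then show ?thesis using lam_cyl that QQQ by auto
  qed
  have lam_nn: "0 \<le> lam (p \<inter> cyl q)" if "p \<in> P" "q \<in> Q" for p q
    using fam_nonneg[OF famL pcq[OF that]] .
  have mu_nn: "0 \<le> mu r" if "r \<in> BB" for r using fam_nonneg[OF famM that] .
  have sumQ: "(\<Sum>q\<in>Q. lam (p \<inter> cyl q)) = lam p" if "p \<in> P" for p
  proof (rule fam_sum_disj[OF algA famL Qf])
    show "\<forall>q\<in>Q. p \<inter> cyl q \<in> AA" using pcq that by blast
    show "\<forall>i\<in>Q. \<forall>j\<in>Q. i \<noteq> j \<longrightarrow> p \<inter> cyl i \<inter> (p \<inter> cyl j) = {}"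
    proof (intro ballI impI)
      fix i j assume ij: "i \<in> Q" "j \<in> Q" "i \<noteq> j"
      have "cyl i \<inter> cyl j = cyl (i \<inter> j)" using cyl_int[OF QY[OF ij(1)] QY[OF ij(2)]] .
      also have "\<dots> = {}" using Qdisj[OF ij] cyl_empty by simp
      finally show "p \<inter> cyl i \<inter> (p \<inter> cyl j) = {}" by blast
    qed
    show "(\<Union>q\<in>Q. p \<inter> cyl q) = p"
    proof safe
      fix c assume "c \<in> p"
      then have "c \<in> X" using PX that by blast
      then obtain a b where ab: "c = a @ b" "a \<in> Y" "b \<in> tup S m" using tup_append_iff by blast
      then obtain q where "q \<in> Q" "a \<in> q" using Qcov by blast
      then have "c \<in> cyl q" using ab unfolding cylx_def by auto
      then show "c \<in> (\<Union>q\<in>Q. p \<inter> cyl q)" using \<open>c \<in> p\<close> \<open>q \<in> Q\<close> by blast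
    qed
  qed
  have sumP: "(\<Sum>p\<in>P. lam (p \<inter> cyl q)) = mu q" if "q \<in> Q" for q
  proof -
    have "(\<Sum>p\<in>P. lam (p \<inter> cyl q)) = lam (cyl q)"
    proof (rule fam_sum_disj[OF algA famL Pf])
      show "\<forall>p\<in>P. p \<inter> cyl q \<in> AA" using pcq that by blast
      show "\<forall>i\<in>P. \<forall>j\<in>P. i \<noteq> j \<longrightarrow> i \<inter> cyl q \<inter> (j \<inter> cyl q) = {}"
      proof (intro ballI impI)
        fix i j assume ij: "i \<in> P" "j \<in> P" "i \<noteq> j"
        then show "i \<inter> cyl q \<inter> (j \<inter> cyl q) = {}" using Pdisj[OF ij] by blast
      qed
      have "cyl q \<subseteq> X" using alg_sub[OF algA cyl_A] QQQ that by blast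
      then show "(\<Union>p\<in>P. p \<inter> cyl q) = cyl q" using Pcov by blast
    qed
    then show ?thesis using lam_cyl QQQ that by auto
  qed
  have sumR: "(\<Sum>r\<in>{r\<in>R. r \<subseteq> q}. mu r) = mu q" if "q \<in> FB \<union> Q" for q
  proof -
    have qY: "q \<subseteq> Y" using that FBQ alg_sub[OF algB] by blast
    show ?thesis
      using fam_atoms_sum[OF algB famM _ FBQ that] FB(1) Qf qY unfolding R_def by auto
  qed
  define cond where "cond p r \<longleftrightarrow> r \<subseteq> pj p \<and> 0 < mu r" for p r
  define W where "W p r = mu r * lam (p \<inter> cyl (qr r)) / mu (qr r)" for p r
  obtain m0 where m0: "m0 \<in> M" using MU by blast
  define c0 where "c0 = replicate (n + m) m0"
  have c0: "c0 \<in> X" "set c0 \<subseteq> M" using m0 MU unfolding c0_def tup_def by auto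
  have ptex: "\<exists>c. c \<in> p \<and> c \<in> cyl r \<and> set c \<subseteq> M" if "p \<in> P" "r \<in> R" "cond p r" for p r
  proof -
    have pA: "p \<in> AA" using PA that(1) by blast
    have "0 < mu r" "r \<in> BB" using that RB unfolding cond_def by auto
    then obtain a where a: "a \<in> r" "set a \<subseteq> M" using fs unfolding fin_sat_in_def by blast
    then have "a \<in> pj p" using that unfolding cond_def by blast
    then obtain b where b: "a \<in> Y" "b \<in> tup S m" "a @ b \<in> p" unfolding prj_def by blast
    then obtain b' where b': "b' \<in> tup S m" "set b' \<subseteq> M" "a @ b' \<in> p"
      using elem_wit[OF em AM pA b(1) a(2) b(2,3)] by blast
    then have "a @ b' \<in> cyl r" using a unfolding cylx_def by auto
    then show ?thesis using b' a by (intro exI[of _ "a @ b'"]) auto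
  qed
  define pt where "pt p r = (SOME c. c \<in> p \<and> c \<in> cyl r \<and> set c \<subseteq> M)" for p r
  have pt: "pt p r \<in> p \<and> pt p r \<in> cyl r \<and> set (pt p r) \<subseteq> M" if "p \<in> P" "r \<in> R" "cond p r" for p r
    unfolding pt_def using someI_ex[OF ptex[OF that]] .
  define w where "w i = (if cond (fst i) (snd i) then W (fst i) (snd i) else 0)" for i
  define c where "c i = (if cond (fst i) (snd i) then pt (fst i) (snd i) else c0)" for i
  define I where "I = P \<times> R"
  have rowsum: "(\<Sum>r\<in>R. w (p, r)) = lam p" if p: "p \<in> P" for p
  proof -
    have "(\<Sum>r\<in>R. w (p, r)) = (\<Sum>q\<in>Q. \<Sum>r\<in>{r \<in> R. qr r = q}. w (p, r))"
    proof -
      have "qr ` R \<subseteq> Q" using qr_ex by blast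
      from sum.group[OF Rf Qf this, of "\<lambda>r. w (p, r)"] show ?thesis by simp
    qed
    also have "\<dots> = (\<Sum>q\<in>Q. lam (p \<inter> cyl q))"
    proof (rule sum.cong[OF refl])
      fix q assume q: "q \<in> Q"
      have set_eq: "{r \<in> R. qr r = q} = {r \<in> R. r \<subseteq> q}" using qr_uniq qr_ex q by blast
      show "(\<Sum>r\<in>{r \<in> R. qr r = q}. w (p, r)) = lam (p \<inter> cyl q)"
      proof (cases "q \<subseteq> pj p")
        case True
        have "w (p, r) = mu r * lam (p \<inter> cyl q) / mu q" if "r \<in> {r \<in> R. r \<subseteq> q}" for r
        proof -
          have "qr r = q" using qr_uniq that q by blast
          moreover have "0 \<le> mu r" using mu_nn RB that by blast
          ultimately show ?thesis using that True unfolding w_def cond_def W_def by auto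
        qed
        then have "(\<Sum>r\<in>{r \<in> R. qr r = q}. w (p, r)) = (\<Sum>r\<in>{r \<in> R. r \<subseteq> q}. mu r) * lam (p \<inter> cyl q) / mu q"
          unfolding set_eq by (simp add: sum_divide_distrib sum_distrib_right)
        also have "\<dots> = mu q * lam (p \<inter> cyl q) / mu q" using sumR q by simp
        also have "\<dots> = lam (p \<inter> cyl q)"
        proof (cases "mu q = 0")
          case True
          then show ?thesis using muq_lam[OF p q] lam_nn[OF p q] by simp
        qed simp
        finally show ?thesis .
      next
        case False
        then have qd: "q \<inter> pj p = {}" using Qdec q p by blast
        have "w (p, r) = 0" if rr: "r \<in> {r \<in> R. r \<subseteq> q}" for r
        proof -
          have "\<not> r \<subseteq> pj p"
          proof
            assume "r \<subseteq> pj p"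
            then have "r \<subseteq> q \<inter> pj p" using rr by blast
            then show False using qd Rne[of r] rr by blast
          qed
          then show ?thesis unfolding w_def cond_def by simp
        qed
        then have "(\<Sum>r\<in>{r \<in> R. qr r = q}. w (p, r)) = 0" unfolding set_eq by simp
        moreover have "lam (p \<inter> cyl q) = 0" using pcq0[OF p q qd] fam_empty[OF algA famL] by simp
        ultimately show ?thesis by simp
      qed
    qed
    also have "\<dots> = lam p" using sumQ p by simp
    finally show ?thesis .
  qed
  have colsum: "(\<Sum>p\<in>P. w (p, r)) = mu r" if r: "r \<in> R" for r
  proof (cases "0 < mu r")
    case False
    then have "mu r = 0" using mu_nn RB r by force
    then show ?thesis unfolding w_def cond_def by simp
  next
    case True
    define q where "q = qr r"
    have q: "q \<in> Q" "r \<subseteq> q" using qr_ex r unfolding q_def by auto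
    have "mu r \<le> mu q" using fam_mono[OF algB famM] RB QQQ QB q r by blast
    then have mq: "0 < mu q" using True by simp
    have "w (p, r) = mu r / mu q * lam (p \<inter> cyl q)" if p: "p \<in> P" for p
    proof (cases "r \<subseteq> pj p")
      case True
      then show ?thesis using \<open>0 < mu r\<close> unfolding w_def cond_def W_def q_def by simp
    next
      case False
      then have "q \<inter> pj p = {}" using Qdec[OF q(1) p] q by blast
      then have "lam (p \<inter> cyl q) = 0" using pcq0[OF p q(1)] fam_empty[OF algA famL] by simp
      then show ?thesis using False unfolding w_def cond_def by simp
    qed
    then have "(\<Sum>p\<in>P. w (p, r)) = mu r / mu q * (\<Sum>p\<in>P. lam (p \<inter> cyl q))"
      by (simp add: sum_distrib_left)
    also have "\<dots> = mu r" using sumP[OF q(1)] mq by simp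
    finally show ?thesis .
  qed
  have wnn: "0 \<le> w i" if iI: "i \<in> I" for i
  proof -
    obtain p r where i: "i = (p, r)" "p \<in> P" "r \<in> R" using iI unfolding I_def by auto
    have "qr r \<in> Q" using qr_ex i by blast
    then show ?thesis using i lam_nn[of p "qr r"] mu_nn[of r] mu_nn[of "qr r"] RB QQQ QB
      unfolding w_def W_def cond_def by (auto intro!: divide_nonneg_nonneg mult_nonneg_nonneg)
  qed
  have cprop: "c i \<in> X \<and> set (c i) \<subseteq> M" if iI: "i \<in> I" for i
  proof -
    obtain p r where i: "i = (p, r)" "p \<in> P" "r \<in> R" using iI unfolding I_def by auto
    show ?thesis using pt[OF i(2,3)] PX[OF i(2)] c0 i(1) unfolding c_def by auto
  qed
  have If: "finite I" unfolding I_def using Pf Rf by simp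
  have dsum: "dirac I w c Z = (\<Sum>p\<in>P. \<Sum>r\<in>R. if c (p, r) \<in> Z then w (p, r) else 0)" for Z
    unfolding dirac_def I_def by (simp add: sum.cartesian_product)
  have dA: "dirac I w c \<alpha> = lam \<alpha>" if "\<alpha> \<in> FA" for \<alpha>
  proof -
    have "(if c (p, r) \<in> \<alpha> then w (p, r) else 0) = (if p \<subseteq> \<alpha> then w (p, r) else 0)"
      if "p \<in> P" "r \<in> R" for p r
    proof (cases "cond p r")
      case True
      then have cp: "c (p, r) \<in> p" using pt that unfolding c_def by simp
      have dec: "p \<subseteq> \<alpha> \<or> p \<inter> \<alpha> = {}" using atoms_decide \<open>\<alpha> \<in> FA\<close> that unfolding P_def by blast
      show ?thesis
      proof (cases "p \<subseteq> \<alpha>")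
        case True then show ?thesis using cp by auto
      next
        case False
        then have "c (p, r) \<notin> \<alpha>" using dec cp by blast
        then show ?thesis using False by simp
      qed
    qed (simp add: w_def)
    then have "dirac I w c \<alpha> = (\<Sum>p\<in>P. if p \<subseteq> \<alpha> then (\<Sum>r\<in>R. w (p, r)) else 0)"
      unfolding dsum by (auto intro!: sum.cong)
    also have "\<dots> = (\<Sum>p\<in>P. if p \<subseteq> \<alpha> then lam p else 0)" using rowsum by (auto intro!: sum.cong)
    also have "\<dots> = (\<Sum>p\<in>{p\<in>P. p \<subseteq> \<alpha>}. lam p)" using Pf by (simp add: sum.inter_filter)
    also have "\<dots> = lam \<alpha>" using fam_atoms_sum[OF algA famL FAf(1,2) that] unfolding P_def by simp
    finally show ?thesis .
  qed
  have dB: "dirac I w c (cyl D) = mu D" if "D \<in> FB" for D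
  proof -
    have DY: "D \<subseteq> Y" using FB that alg_sub[OF algB] by blast
    have "(if c (p, r) \<in> cyl D then w (p, r) else 0) = (if r \<subseteq> D then w (p, r) else 0)"
      if "p \<in> P" "r \<in> R" for p r
    proof (cases "cond p r")
      case True
      then have "c (p, r) \<in> cyl r" using pt that unfolding c_def by simp
      then obtain a b where ab: "c (p, r) = a @ b" "a \<in> r" "b \<in> tup S m" unfolding cylx_def by blast
      have aY: "a \<in> Y" using ab RY that by blast
      have "c (p, r) \<in> cyl D \<longleftrightarrow> a \<in> D" using mem_cyl[OF aY ab(3) DY] ab by simp
      moreover have dec: "r \<subseteq> D \<or> r \<inter> D = {}" using Rdec[OF that(2), of D] \<open>D \<in> FB\<close> by blast
      ultimately have "c (p, r) \<in> cyl D \<longleftrightarrow> r \<subseteq> D" using ab(2) by blast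
      then show ?thesis by simp
    qed (simp add: w_def)
    then have "dirac I w c (cyl D) = (\<Sum>p\<in>P. \<Sum>r\<in>R. if r \<subseteq> D then w (p, r) else 0)"
      unfolding dsum by (auto intro!: sum.cong)
    also have "\<dots> = (\<Sum>r\<in>R. if r \<subseteq> D then (\<Sum>p\<in>P. w (p, r)) else 0)"
      by (subst sum.swap) (auto intro!: sum.cong)
    also have "\<dots> = (\<Sum>r\<in>R. if r \<subseteq> D then mu r else 0)" using colsum by (auto intro!: sum.cong)
    also have "\<dots> = (\<Sum>r\<in>{r\<in>R. r \<subseteq> D}. mu r)" using Rf by (simp add: sum.inter_filter)
    also have "\<dots> = mu D" using sumR that by simp
    finally show ?thesis .
  qed
  have "sum w I = dirac I w c X" using cprop by (simp add: dirac_all)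
  also have "\<dots> = 1" using dA[OF FAf(3)] fam_U[OF famL] by simp
  finally have s1: "sum w I = 1" .
  have dA0: "\<forall>\<alpha>\<in>FA0. dirac I w c \<alpha> = lam \<alpha>" using dA unfolding FA_def by simp
  have dB0: "\<forall>D\<in>FB. dirac I w c (cyl D) = mu D" using dB by simp
  have p0: "\<forall>i\<in>I. 0 \<le> w i \<and> c i \<in> X \<and> set (c i) \<subseteq> M" using wnn cprop by simp
  show ?thesis
    by (rule exI[of _ I], rule exI[of _ w], rule exI[of _ c]) (use If p0 s1 dA0 dB0 in simp)
qed

end


lemma compact_box: "compact (PiE UNIV (\<lambda>_::'b. {0..1::real}))"
proof -
  have "compactin (product_topology (\<lambda>_::'b. euclidean) UNIV) (PiE UNIV (\<lambda>_. {0..1::real}))"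
    by (subst compactin_PiE) auto
  then show ?thesis by (simp add: euclidean_product_topology)
qed

lemma closed_eq_const: "closed {\<rho> :: 'b \<Rightarrow> real. \<rho> Z = v}"
  by (rule closed_Collect_eq) (auto intro: continuous_on_product_coordinates)

lemma closed_eq_coord: "closed {\<rho> :: 'b \<Rightarrow> real. \<rho> Z = \<rho> Z'}"
  by (rule closed_Collect_eq) (auto intro: continuous_on_product_coordinates)

lemma closed_eq_add: "closed {\<rho> :: 'b \<Rightarrow> real. \<rho> Z = \<rho> Z1 + \<rho> Z2}"
  by (rule closed_Collect_eq) (auto intro!: continuous_on_product_coordinates continuous_on_add)

context amal
begin

abbreviation "MX \<equiv> {c \<in> X. set c \<subseteq> M}"

lemma amalgam:
  "\<exists>\<omega>. keisler S (n + m) (univ S) \<omega> \<and> (\<forall>D\<in>AA. \<omega> D = lam D) \<and>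
       (\<forall>D\<in>BB. pix S n m \<omega> D = mu D) \<and> (\<forall>Z. 0 < \<omega> Z \<longrightarrow> (\<exists>c\<in>Z. set c \<subseteq> M))"
proof -
  define DP where "DP = {p :: 'a list set \<times> 'a list set. fst p \<inter> snd p = {}}"
  define K0 where "K0 = PiE UNIV (\<lambda>_::'a list set. {0..1::real})
     \<inter> (\<Inter>p\<in>DP. {\<rho>. \<rho> (fst p \<union> snd p) = \<rho> (fst p) + \<rho> (snd p)})
     \<inter> (\<Inter>Z. {\<rho>. \<rho> Z = \<rho> (Z \<inter> MX)}) \<inter> {\<rho>. \<rho> X = 1}"
  have cK0: "compact K0" unfolding K0_def
    by (intro compact_Int_closed compact_box closed_INT ballI closed_eq_add closed_eq_coord closed_eq_const)
  define f where "f = case_sum (\<lambda>\<alpha>. {\<rho> :: 'a list set \<Rightarrow> real. \<rho> \<alpha> = lam \<alpha>}) (\<lambda>D. {\<rho>. \<rho> (cyl D) = mu D})"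
  define J where "J = Inl ` AA \<union> Inr ` BB"
  have cf: "closed (f i)" for i unfolding f_def by (cases i) (auto intro: closed_eq_const)
  have "K0 \<inter> (\<Inter>i\<in>J. f i) \<noteq> {}"
  proof (rule compact_imp_fip_image[OF cK0 cf])
    fix J' assume J': "finite J'" "J' \<subseteq> J"
    define FA0 where "FA0 = Inl -` J'"
    define FB where "FB = Inr -` J'"
    have f1: "finite FA0" "FA0 \<subseteq> AA" using J' unfolding FA0_def J_def
      by (auto intro: finite_vimageI simp: inj_on_def)
    have f2: "finite FB" "FB \<subseteq> BB" using J' unfolding FB_def J_def
      by (auto intro: finite_vimageI simp: inj_on_def)
    obtain I :: "('a list set \<times> 'a list set) set" and w c where
      h: "finite I" "\<forall>i\<in>I. 0 \<le> w i \<and> c i \<in> X \<and> set (c i) \<subseteq> M" "sum w I = 1"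
        "\<forall>\<alpha>\<in>FA0. dirac I w c \<alpha> = lam \<alpha>" "\<forall>D\<in>FB. dirac I w c (cyl D) = mu D"
      using fin_step[OF f1 f2] by blast
    define \<rho> where "\<rho> = dirac I w c"
    have "\<rho> \<in> K0" unfolding K0_def
    proof (intro IntI)
      show "\<rho> \<in> PiE UNIV (\<lambda>_. {0..1})" unfolding \<rho>_def using dirac_range[of I w c] h(2,3) by auto
      show "\<rho> \<in> (\<Inter>p\<in>DP. {\<rho>. \<rho> (fst p \<union> snd p) = \<rho> (fst p) + \<rho> (snd p)})"
        unfolding \<rho>_def DP_def using dirac_add by fastforce
      show "\<rho> \<in> (\<Inter>Z. {\<rho>. \<rho> Z = \<rho> (Z \<inter> MX)})"
        unfolding \<rho>_def using dirac_restr[of I c MX w] h(2) by auto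
      show "\<rho> \<in> {\<rho>. \<rho> X = 1}" unfolding \<rho>_def using dirac_all[of I c X w] h(2,3) by auto
    qed
    moreover have "\<rho> \<in> f i" if "i \<in> J'" for i
    proof (cases i)
      case (Inl \<alpha>) then show ?thesis using that h(4) unfolding f_def FA0_def \<rho>_def by auto
    next
      case (Inr D) then show ?thesis using that h(5) unfolding f_def FB_def \<rho>_def by auto
    qed
    ultimately show "K0 \<inter> (\<Inter>i\<in>J'. f i) \<noteq> {}" by blast
  qed
  then obtain \<rho> where \<rho>: "\<rho> \<in> K0" "\<forall>i\<in>J. \<rho> \<in> f i" by blast
  have r01: "\<rho> Z \<in> {0..1}" for Z using \<rho>(1) unfolding K0_def by auto
  have radd: "\<rho> (Z1 \<union> Z2) = \<rho> Z1 + \<rho> Z2" if "Z1 \<inter> Z2 = {}" for Z1 Z2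
    using \<rho>(1) that unfolding K0_def DP_def by fastforce
  have rres: "\<rho> Z = \<rho> (Z \<inter> MX)" for Z using \<rho>(1) unfolding K0_def by auto
  have rX: "\<rho> X = 1" using \<rho>(1) unfolding K0_def by auto
  have r0: "\<rho> {} = 0" using radd[of "{}" "{}"] by simp
  have "keisler S (n + m) (univ S) \<rho>"
    unfolding keisler_def using r01 rX radd by auto
  moreover have "\<forall>D\<in>AA. \<rho> D = lam D"
  proof
    fix D assume "D \<in> AA"
    then have "Inl D \<in> J" unfolding J_def by blast
    then show "\<rho> D = lam D" using \<rho>(2) unfolding f_def by fastforce
  qed
  moreover have "\<forall>D\<in>BB. pix S n m \<rho> D = mu D"
  proof
    fix D assume "D \<in> BB"
    then have "Inr D \<in> J" unfolding J_def by blast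
    then show "pix S n m \<rho> D = mu D" using \<rho>(2) unfolding f_def pix_cylx by fastforce
  qed
  moreover have "\<forall>Z. 0 < \<rho> Z \<longrightarrow> (\<exists>c\<in>Z. set c \<subseteq> M)"
  proof (intro allI impI)
    fix Z assume "0 < \<rho> Z"
    then have "Z \<inter> MX \<noteq> {}" using rres[of Z] r0 by auto
    then show "\<exists>c\<in>Z. set c \<subseteq> M" by blast
  qed
  ultimately show ?thesis by blast
qed

end

lemma core:
  fixes S :: "('a,'f,'r) struc"
  assumes em: "elem_sub M S" and AM: "A \<subseteq> M" and ed: "edom_at S n m A \<mu> \<nu>"
    and mu: "keisler S n (univ S) \<mu>" and fs: "fin_sat_in S n M \<mu>"
  shows "fin_sat_in S m M \<nu>"
proof -
  obtain lam where lam: "keisler S (n + m) A lam" "\<forall>D\<in>defsets S n A. pix S n m lam D = \<mu> D"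
    "\<forall>\<omega>. keisler S (n + m) (univ S) \<omega> \<longrightarrow>
           (\<forall>D\<in>defsets S (n + m) A. \<omega> D = lam D) \<longrightarrow>
           (\<forall>D\<in>defsets S n (univ S). pix S n m \<omega> D = \<mu> D) \<longrightarrow>
           (\<forall>D\<in>defsets S m (univ S). piy S n m \<omega> D = \<nu> D)"
    using ed unfolding edom_at_def by blast
  interpret amal S M A n m lam \<mu>
    using em AM lam(1,2) mu fs by unfold_locales auto
  obtain \<omega> where \<omega>: "keisler S (n + m) (univ S) \<omega>" "\<forall>D\<in>defsets S (n + m) A. \<omega> D = lam D"
    "\<forall>D\<in>defsets S n (univ S). pix S n m \<omega> D = \<mu> D" "\<forall>Z. 0 < \<omega> Z \<longrightarrow> (\<exists>c\<in>Z. set c \<subseteq> M)"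
    using amalgam by blast
  have ny: "\<forall>D\<in>defsets S m (univ S). piy S n m \<omega> D = \<nu> D" using lam(3) \<omega>(1-3) by blast
  show ?thesis unfolding fin_sat_in_def
  proof (intro ballI impI)
    fix D assume D: "D \<in> defsets S m (univ S)" "0 < \<nu> D"
    then have "0 < \<omega> (cyly S n D)" using ny piy_cyly by metis
    then obtain c where c: "c \<in> cyly S n D" "set c \<subseteq> M" using \<omega>(4) by blast
    then obtain a b where "c = a @ b" "b \<in> D" unfolding cyly_def by blast
    then show "\<exists>b\<in>D. set b \<subseteq> M" using c(2) by auto
  qed
qed


unbundle cardinal_syntax



lemma fin_le_inf: "finite A \<Longrightarrow> \<not> finite B \<Longrightarrow> |A| \<le>o |B|"
  using finite_ordLess_infinite[OF card_of_Well_order card_of_Well_order, of A B]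
  by (simp add: Field_card_of ordLess_imp_ordLeq)

lemma un_le: assumes "\<not> finite L" "|A| \<le>o |L|" "|B| \<le>o |L|" shows "|A \<union> B| \<le>o |L|"
proof -
  have "|\<Union>b\<in>(UNIV::bool set). (if b then A else B)| \<le>o |L|"
    by (rule card_of_UNION_ordLeq_infinite) (use assms fin_le_inf[of "UNIV :: bool set" L] in auto)
  moreover have "(\<Union>b\<in>(UNIV::bool set). (if b then A else B)) = A \<union> B" by auto
  ultimately show ?thesis by simp
qed

lemma times_le: assumes "\<not> finite L" "|A| \<le>o |L|" "|B| \<le>o |L|" shows "|A \<times> B| \<le>o |L|"
proof -
  have "|A \<times> B| \<le>o |L \<times> B|" using card_of_Times_mono1 assms(2) by blast
  also have "|L \<times> B| \<le>o |L \<times> L|" using card_of_Times_mono2 assms(3) by blast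
  also have "|L \<times> L| \<le>o |L|" using card_of_Times_same_infinite[OF assms(1)] ordIso_iff_ordLeq by blast
  finally show ?thesis .
qed

lemma inj_le: "inj_on f A \<Longrightarrow> f ` A \<subseteq> B \<Longrightarrow> |A| \<le>o |B|"
  using card_of_ordLeq by blast

lemma lists_le: assumes L: "\<not> finite L" and A: "|A| \<le>o |L|" shows "|lists A| \<le>o |L|"
proof -
  define Lk where "Lk k = {xs \<in> lists A. length xs = k}" for k
  have "|Lk k| \<le>o |L|" for k
  proof (induction k)
    case 0
    have "Lk 0 = {[]}" unfolding Lk_def by auto
    then show ?case using fin_le_inf[OF _ L, of "{[]}"] by simp
  next
    case (Suc k)
    have "Lk (Suc k) = (\<lambda>(a, xs). a # xs) ` (A \<times> Lk k)"
      unfolding Lk_def by (auto simp: length_Suc_conv image_iff)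
    moreover have "|(\<lambda>(a, xs). a # xs) ` (A \<times> Lk k)| \<le>o |A \<times> Lk k|" by (rule card_of_image)
    moreover have "|A \<times> Lk k| \<le>o |L|" using times_le[OF L A Suc] .
    ultimately show ?case using ordLeq_transitive by metis
  qed
  moreover have "|UNIV :: nat set| \<le>o |L|" using L infinite_iff_card_of_nat by blast
  ultimately have "|\<Union>k. Lk k| \<le>o |L|"
    using card_of_UNION_ordLeq_infinite[OF L, of UNIV Lk] by simp
  moreover have "(\<Union>k. Lk k) = lists A" unfolding Lk_def by auto
  ultimately show ?thesis by simp
qed

datatype ('f, 'r) tok = TV nat | TF 'f nat | TFF | TEq | TR 'r nat | TN | TC | TE nat

fun enct :: "'f trm \<Rightarrow> ('f, 'r) tok list" where
  "enct (Var i) = [TV i]"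
| "enct (Fn f ts) = TF f (length ts) # concat (map enct ts)"

fun encf :: "('f, 'r) fm \<Rightarrow> ('f, 'r) tok list" where
  "encf FF = [TFF]"
| "encf (Eq s t) = TEq # enct s @ enct t"
| "encf (Rel r ts) = TR r (length ts) # concat (map enct ts)"
| "encf (Neg \<phi>) = TN # encf \<phi>"
| "encf (Conj \<phi> \<psi>) = TC # encf \<phi> @ encf \<psi>"
| "encf (Ex i \<phi>) = TE i # encf \<phi>"

lemma enct_prefix: "(enct s :: ('f,'r) tok list) @ xs = enct t @ ys \<Longrightarrow> s = t \<and> xs = ys"
proof (induction s arbitrary: t xs ys)
  case (Var i)
  then show ?case by (cases t) auto
next
  case (Fn f ss)
  then obtain g ts where t: "t = Fn g ts" by (cases t) auto
  have h: "f = g" "length ss = length ts"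
    "concat (map enct ss) @ xs = (concat (map enct ts) :: ('f,'r) tok list) @ ys"
    using Fn.prems t by auto
  have "ss = ts \<and> xs = ys" using Fn.IH h(2,3)
  proof (induction ss arbitrary: ts)
    case Nil then show ?case by simp
  next
    case (Cons s1 ss')
    then obtain t1 ts' where ts: "ts = t1 # ts'" by (cases ts) auto
    have "(enct s1 :: ('f,'r) tok list) @ (concat (map enct ss') @ xs) = enct t1 @ (concat (map enct ts') @ ys)"
      using Cons.prems(3) ts by simp
    then have a: "s1 = t1" "concat (map enct ss') @ xs = (concat (map enct ts') :: ('f,'r) tok list) @ ys"
      using Cons.prems(1)[of s1] by auto
    have "ss' = ts' \<and> xs = ys" using Cons.IH[of ts'] Cons.prems(1,2) a(2) ts by auto
    then show ?case using a ts by simp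
  qed
  then show ?case using h t by simp
qed

lemma enctl_prefix: "length ss = length ts \<Longrightarrow>
   (concat (map enct ss) :: ('f,'r) tok list) @ xs = concat (map enct ts) @ ys \<Longrightarrow> ss = ts \<and> xs = ys"
proof (induction ss arbitrary: ts)
  case Nil then show ?case by simp
next
  case (Cons s1 ss')
  then obtain t1 ts' where ts: "ts = t1 # ts'" by (cases ts) auto
  have "(enct s1 :: ('f,'r) tok list) @ (concat (map enct ss') @ xs) = enct t1 @ (concat (map enct ts') @ ys)"
    using Cons.prems(2) ts by simp
  then have a: "s1 = t1" "concat (map enct ss') @ xs = (concat (map enct ts') :: ('f,'r) tok list) @ ys"
    using enct_prefix by blast+
  then show ?case using Cons.IH[of ts'] Cons.prems(1) ts by auto
qed

lemma encf_prefix: "encf \<phi> @ xs = encf \<psi> @ ys \<Longrightarrow> \<phi> = \<psi> \<and> xs = ys"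
proof (induction \<phi> arbitrary: \<psi> xs ys)
  case FF then show ?case by (cases \<psi>) auto
next
  case (Eq s t)
  obtain s' t' where p: "\<psi> = Eq s' t'" using Eq.prems by (cases \<psi>) auto
  have "enct s @ (enct t @ xs) = enct s' @ (enct t' @ ys)" using Eq p by simp
  then have "s = s'" "enct t @ xs = enct t' @ ys" using enct_prefix by blast+
  then show ?case using enct_prefix p by blast
next
  case (Rel r ts)
  obtain r' ts' where p: "\<psi> = Rel r' ts'" using Rel.prems by (cases \<psi>) auto
  then show ?case using Rel enctl_prefix[of ts ts'] by auto
next
  case (Neg \<phi>)
  obtain \<phi>' where p: "\<psi> = Neg \<phi>'" using Neg.prems by (cases \<psi>) auto
  then show ?case using Neg by auto
next
  case (Conj \<phi>1 \<phi>2)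
  obtain \<psi>1 \<psi>2 where p: "\<psi> = Conj \<psi>1 \<psi>2" using Conj.prems by (cases \<psi>) auto
  have "encf \<phi>1 @ (encf \<phi>2 @ xs) = encf \<psi>1 @ (encf \<psi>2 @ ys)" using Conj.prems p by simp
  then have "\<phi>1 = \<psi>1" "encf \<phi>2 @ xs = encf \<psi>2 @ ys" using Conj.IH(1) by blast+
  then show ?case using Conj.IH(2) p by blast
next
  case (Ex i \<phi>)
  obtain \<phi>' where p: "\<psi> = Ex i \<phi>'" using Ex.prems by (cases \<psi>) auto
  then show ?case using Ex by auto
qed

lemma inj_encf: "inj encf"
  unfolding inj_def by (metis append_Nil2 encf_prefix)



lemma finite_fvt: "finite (fvt t)"
  by (induction t) auto

lemma finite_fv: "finite (fv \<phi>)"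
  by (induction \<phi>) (auto simp: finite_fvt)

lemma TV:
  fixes S :: "('a,'f,'r) struc"
  assumes sub: "M' \<subseteq> univ S" and ne: "M' \<noteq> {}"
    and fc: "\<forall>f as. set as \<subseteq> M' \<longrightarrow> fnc S f as \<in> M'"
    and tv: "\<forall>(\<phi> :: ('f,'r) fm) i e. (\<forall>j. e j \<in> M') \<longrightarrow> (\<exists>a\<in>univ S. sat S \<phi> (e(i:=a))) \<longrightarrow>
               (\<exists>a\<in>M'. sat S \<phi> (e(i:=a)))"
  shows "elem_sub M' S"
proof -
  have "sat (S\<lparr>univ := M'\<rparr>) \<phi> e \<longleftrightarrow> sat S \<phi> e" if "\<forall>j. e j \<in> M'" for \<phi> :: "('f,'r) fm" and e
    using that
  proof (induction \<phi> arbitrary: e)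
    case (Eq s t) then show ?case by (simp add: evalt_univ)
  next
    case (Rel r ts)
    have m1: "map (evalt (S\<lparr>univ := M'\<rparr>) e) ts = map (evalt S e) ts" by (simp add: evalt_univ)
    have m2: "rel (S\<lparr>univ := M'\<rparr>) = rel S" by simp
    show ?case by (simp only: sat.simps m1 m2)
  next
    case (Ex i \<phi>)
    have "sat (S\<lparr>univ := M'\<rparr>) (Ex i \<phi>) e \<longleftrightarrow> (\<exists>a\<in>M'. sat (S\<lparr>univ := M'\<rparr>) \<phi> (e(i:=a)))" by simp
    also have "\<dots> \<longleftrightarrow> (\<exists>a\<in>M'. sat S \<phi> (e(i:=a)))"
      using Ex.IH Ex.prems by (auto simp: fun_upd_def)
    also have "\<dots> \<longleftrightarrow> (\<exists>a\<in>univ S. sat S \<phi> (e(i:=a)))"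
      using tv Ex.prems sub by blast
    finally show ?case by simp
  qed auto
  then show ?thesis unfolding elem_sub_def using sub ne fc by blast
qed

fun bigc :: "('f,'r) fm list \<Rightarrow> ('f,'r) fm" where
  "bigc [] = Neg FF"
| "bigc (\<phi> # \<phi>s) = Conj \<phi> (bigc \<phi>s)"

lemma sat_bigc: "sat S (bigc \<phi>s) e \<longleftrightarrow> (\<forall>\<phi>\<in>set \<phi>s. sat S \<phi> e)"
  by (induction \<phi>s) auto

lemma finite_elem_univ:
  fixes S :: "('a,'f,'r) struc"
  assumes em: "elem_sub M S" and fin: "finite M"
  shows "univ S \<subseteq> M"
proof
  fix x assume x: "x \<in> univ S"
  obtain xs where xs: "set xs = M" using finite_list[OF fin] by blast
  obtain m0 where m0: "m0 \<in> M" using em unfolding elem_sub_def by blast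
  define \<phi> :: "('f,'r) fm" where
    "\<phi> = Ex 0 (bigc (map (\<lambda>j. Neg (Eq (Var 0) (Var (Suc j)))) [0..<length xs]))"
  define e where "e j = (if j = 0 then m0 else if j - 1 < length xs then xs ! (j - 1) else m0)" for j
  have eM: "\<forall>j. e j \<in> M" using m0 xs unfolding e_def by auto
  have satT: "sat T \<phi> e \<longleftrightarrow> (\<exists>a\<in>univ T. \<forall>j<length xs. a \<noteq> xs ! j)" for T :: "('a,'f,'r) struc"
    unfolding \<phi>_def by (simp add: sat_bigc e_def) (meson atLeastLessThan_iff zero_le)
  have "\<not> sat (S\<lparr>univ := M\<rparr>) \<phi> e" unfolding satT using xs by (auto simp: in_set_conv_nth)
  then have "\<not> sat S \<phi> e" using em eM unfolding elem_sub_def by blast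
  then obtain j where "j < length xs" "x = xs ! j" using x unfolding satT by blast
  then show "x \<in> M" using xs by auto
qed

lemma plus_le: assumes "\<not> finite L" "|A| \<le>o |L|" "|B| \<le>o |L|" shows "|A <+> B| \<le>o |L|"
proof -
  have "A <+> B = Inl ` A \<union> Inr ` B" by auto
  moreover have "|Inl ` A| \<le>o |L|" using card_of_image ordLeq_transitive assms(2) by blast
  moreover have "|Inr ` B| \<le>o |L|" using card_of_image ordLeq_transitive assms(3) by blast
  ultimately show ?thesis using un_le[OF assms(1)] by simp
qed

definition tokmap :: "('f,'r) tok \<Rightarrow> ('f + 'r + nat) \<times> nat" where
  "tokmap t = (case t of TV i \<Rightarrow> (Inr (Inr 0), i) | TF f k \<Rightarrow> (Inl f, k) | TFF \<Rightarrow> (Inr (Inr 1), 0)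
     | TEq \<Rightarrow> (Inr (Inr 2), 0) | TR r k \<Rightarrow> (Inr (Inl r), k) | TN \<Rightarrow> (Inr (Inr 3), 0)
     | TC \<Rightarrow> (Inr (Inr 4), 0) | TE i \<Rightarrow> (Inr (Inr 5), i))"

lemma inj_tokmap: "inj tokmap"
proof (rule injI)
  fix x y :: "('f,'r) tok" assume "tokmap x = tokmap y"
  then show "x = y" unfolding tokmap_def by (cases x; cases y) auto
qed

lemma fm_le:
  assumes L: "\<not> finite L" and f: "|UNIV :: 'f set| \<le>o |L|" and r: "|UNIV :: 'r set| \<le>o |L|"
  shows "|UNIV :: ('f,'r) fm set| \<le>o |L|"
proof -
  have n: "|UNIV :: nat set| \<le>o |L|" using L infinite_iff_card_of_nat by blast
  have "|UNIV :: ('f + 'r + nat) set| \<le>o |L|"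
    using plus_le[OF L f plus_le[OF L r n]] by simp
  then have "|(UNIV :: ('f + 'r + nat) set) \<times> (UNIV :: nat set)| \<le>o |L|" using times_le[OF L _ n] by blast
  moreover have "|UNIV :: ('f,'r) tok set| \<le>o |(UNIV :: ('f + 'r + nat) set) \<times> (UNIV :: nat set)|"
    by (rule inj_le[of tokmap]) (auto simp: inj_tokmap)
  ultimately have "|UNIV :: ('f,'r) tok set| \<le>o |L|" using ordLeq_transitive by blast
  then have "|lists (UNIV :: ('f,'r) tok set)| \<le>o |L|" using lists_le[OF L] by blast
  moreover have "|UNIV :: ('f,'r) fm set| \<le>o |lists (UNIV :: ('f,'r) tok set)|"
    by (rule inj_le[of encf]) (auto simp: inj_encf)
  ultimately show ?thesis using ordLeq_transitive by blast
qed

lemma LS: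
  fixes S :: "('a,'f,'r) struc"
  assumes wf: "wf_struc S" and L: "\<not> finite L" and f: "|UNIV :: 'f set| \<le>o |L|"
    and r: "|UNIV :: 'r set| \<le>o |L|" and B0: "B0 \<subseteq> univ S" "B0 \<noteq> {}" "|B0| \<le>o |L|"
  shows "\<exists>M'. B0 \<subseteq> M' \<and> elem_sub M' S \<and> |M'| \<le>o |L|"
proof -
  obtain b0 where b0: "b0 \<in> B0" using B0 by blast
  have n: "|UNIV :: nat set| \<le>o |L|" using L infinite_iff_card_of_nat by blast
  have fmL: "|UNIV :: ('f,'r) fm set| \<le>o |L|" using fm_le[OF L f r] .
  define lst where "lst as j = (if j < length as then as ! j else b0)" for as :: "'a list" and j
  define wit where "wit \<phi> i as = (if \<exists>a\<in>univ S. sat S \<phi> ((lst as)(i:=a))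
      then SOME a. a \<in> univ S \<and> sat S \<phi> ((lst as)(i:=a)) else b0)" for \<phi> :: "('f,'r) fm" and i as
  define step where "step B = B \<union> (\<lambda>(f, as). fnc S f as) ` (UNIV \<times> lists B)
      \<union> (\<lambda>(\<phi>, i, as). wit \<phi> i as) ` (UNIV \<times> UNIV \<times> lists B)" for B
  define Bk where "Bk k = (step ^^ k) B0" for k
  have Bk_Suc: "Bk (Suc k) = step (Bk k)" for k unfolding Bk_def by simp
  have Bk0: "Bk 0 = B0" unfolding Bk_def by simp
  have wit_univ: "wit \<phi> i as \<in> univ S" for \<phi> i as
  proof (cases "\<exists>a\<in>univ S. sat S \<phi> ((lst as)(i:=a))")
    case True
    then have "\<exists>a. a \<in> univ S \<and> sat S \<phi> ((lst as)(i:=a))" by blast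
    then show ?thesis unfolding wit_def using someI_ex[of "\<lambda>a. a \<in> univ S \<and> sat S \<phi> ((lst as)(i:=a))"] True
      by auto
  qed (use b0 B0 wit_def in auto)
  have step_univ: "step B \<subseteq> univ S" if "B \<subseteq> univ S" for B
  proof -
    have "fnc S f as \<in> univ S" if "as \<in> lists B" for f as
      using wf that \<open>B \<subseteq> univ S\<close> unfolding wf_struc_def by blast
    then show ?thesis unfolding step_def using that wit_univ by auto
  qed
  have Bk_univ: "Bk k \<subseteq> univ S" for k
    by (induction k) (use B0 step_univ Bk0 Bk_Suc in auto)
  have step_mono: "B \<subseteq> step B" for B unfolding step_def by blast
  have Bk_mono: "Bk k \<subseteq> Bk k'" if "k \<le> k'" for k k'
    using lift_Suc_mono_le[of Bk, OF _ that] step_mono Bk_Suc by metis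
  have step_le: "|step B| \<le>o |L|" if "|B| \<le>o |L|" for B
  proof -
    have lB: "|lists B| \<le>o |L|" using lists_le[OF L that] .
    have "|(\<lambda>(f, as). fnc S f as) ` (UNIV \<times> lists B)| \<le>o |L|"
      using card_of_image ordLeq_transitive times_le[OF L f lB] by blast
    moreover have "|(\<lambda>(\<phi>, i, as). wit \<phi> i as) ` ((UNIV :: ('f,'r) fm set) \<times> (UNIV :: nat set) \<times> lists B)| \<le>o |L|"
      using card_of_image ordLeq_transitive times_le[OF L fmL times_le[OF L n lB]] by blast
    ultimately show ?thesis unfolding step_def using un_le[OF L] that by metis
  qed
  have Bk_le: "|Bk k| \<le>o |L|" for k
    by (induction k) (use B0 step_le Bk0 Bk_Suc in auto)
  define M' where "M' = (\<Union>k. Bk k)"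
  have M'le: "|M'| \<le>o |L|" unfolding M'_def
    using card_of_UNION_ordLeq_infinite[OF L n] Bk_le by blast
  have fin_in: "\<exists>k. set as \<subseteq> Bk k" if "set as \<subseteq> M'" for as
    using that
  proof (induction as)
    case Nil then show ?case by simp
  next
    case (Cons x xs)
    then obtain k1 where k1: "x \<in> Bk k1" unfolding M'_def by auto
    obtain k2 where k2: "set xs \<subseteq> Bk k2" using Cons by auto
    have "x \<in> Bk (max k1 k2)" "set xs \<subseteq> Bk (max k1 k2)"
      using k1 k2 Bk_mono[of k1 "max k1 k2"] Bk_mono[of k2 "max k1 k2"] by auto
    then show ?case by auto
  qed
  have M'U: "M' \<subseteq> univ S" unfolding M'_def using Bk_univ by blast
  have B0M: "B0 \<subseteq> M'" unfolding M'_def using Bk0 by blast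
  have fc: "\<forall>f as. set as \<subseteq> M' \<longrightarrow> fnc S f as \<in> M'"
  proof (intro allI impI)
    fix f as assume "set as \<subseteq> M'"
    then obtain k where "set as \<subseteq> Bk k" using fin_in by blast
    then have "fnc S f as \<in> step (Bk k)" unfolding step_def by blast
    then show "fnc S f as \<in> M'" unfolding M'_def using Bk_Suc by blast
  qed
  have tv: "\<forall>(\<phi> :: ('f,'r) fm) i e. (\<forall>j. e j \<in> M') \<longrightarrow> (\<exists>a\<in>univ S. sat S \<phi> (e(i:=a))) \<longrightarrow>
               (\<exists>a\<in>M'. sat S \<phi> (e(i:=a)))"
  proof (intro allI impI)
    fix \<phi> :: "('f,'r) fm" and i e
    assume eM: "\<forall>j. e j \<in> M'" and ex: "\<exists>a\<in>univ S. sat S \<phi> (e(i:=a))"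
    obtain N where N: "fv \<phi> \<subseteq> {..<N}" using finite_fv[of \<phi>] finite_nat_iff_bounded by blast
    define as where "as = map e [0..<N]"
    have "set as \<subseteq> M'" unfolding as_def using eM by auto
    then obtain k where k: "set as \<subseteq> Bk k" using fin_in by blast
    have agree: "sat S \<phi> (e(i:=a)) \<longleftrightarrow> sat S \<phi> ((lst as)(i:=a))" for a
      by (rule sat_cong) (use N in \<open>auto simp: lst_def as_def\<close>)
    have ex2: "\<exists>a\<in>univ S. sat S \<phi> ((lst as)(i:=a))" using ex agree by blast
    then have "\<exists>a. a \<in> univ S \<and> sat S \<phi> ((lst as)(i:=a))" by blast
    then have w: "sat S \<phi> ((lst as)(i := wit \<phi> i as))"
      unfolding wit_def using someI_ex[of "\<lambda>a. a \<in> univ S \<and> sat S \<phi> ((lst as)(i:=a))"] ex2 by auto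
    have "wit \<phi> i as \<in> step (Bk k)" unfolding step_def using k by (auto intro!: image_eqI[of _ _ "(\<phi>, i, as)"])
    then have "wit \<phi> i as \<in> M'" unfolding M'_def using Bk_Suc by blast
    then show "\<exists>a\<in>M'. sat S \<phi> (e(i:=a))" using w agree by blast
  qed
  have "elem_sub M' S" using TV[OF M'U _ fc tv] B0M B0 by blast
  then show ?thesis using B0M M'le by blast
qed


unbundle no cardinal_syntax


lemma fs_empty_nu:
  fixes S :: "('a,'f,'r) struc"
  assumes "keisler S m (univ S) \<nu>" "univ S \<subseteq> M"
  shows "fin_sat_in S m M \<nu>"
  unfolding fin_sat_in_def
proof (intro ballI impI)
  fix D assume D: "D \<in> defsets S m (univ S)" "0 < \<nu> D"
  have "\<nu> {} = 0" using fam_empty[OF alg_defsets] assms(1) keisler_fam by blast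
  then have "D \<noteq> {}" using D by auto
  then obtain b where "b \<in> D" by blast
  moreover then have "set b \<subseteq> univ S" using defsets_sub[OF D(1)] by (auto simp: tup_def)
  ultimately show "\<exists>b\<in>D. set b \<subseteq> M" using assms(2) by blast
qed

context includes cardinal_syntax
begin

lemma part2:
  fixes K :: "'k set" and S :: "('a,'f,'r) struc"
  assumes mon: "monster K S" and mu: "keisler S n (univ S) \<mu>" and nu: "keisler S m (univ S) \<nu>"
    and fs: "fin_sat K S n \<mu>" and ed: "edom K S n m \<mu> \<nu>"
  shows "fin_sat K S m \<nu>"
proof -
  obtain M1 where M1: "elem_sub M1 S" "small K M1" "fin_sat_in S n M1 \<mu>"
    using fs unfolding fin_sat_def by blast
  obtain A where A: "A \<subseteq> univ S" "small K A" "edom_at S n m A \<mu> \<nu>"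
    using ed unfolding edom_def by blast
  have infK: "\<not> finite K" and wf: "wf_struc S" and fK: "|UNIV :: 'f set| <o |K|" and rK: "|UNIV :: 'r set| <o |K|"
    using mon unfolding monster_def small_def by auto
  have M1U: "M1 \<subseteq> univ S" "M1 \<noteq> {}" using M1(1) unfolding elem_sub_def by auto
  show ?thesis
  proof (cases "|UNIV :: nat set| <o |K|")
    case True
    define L where "L = (A \<union> M1) <+> (UNIV :: ('f + 'r + nat) set)"
    have Linf: "\<not> finite L"
    proof -
      have "|UNIV :: nat set| \<le>o |L|"
        by (rule inj_le[of "\<lambda>k. Inr (Inr (Inr k))"]) (auto simp: L_def inj_on_def)
      then show ?thesis using infinite_iff_card_of_nat by blast
    qed
    have "|A \<union> M1| <o |K|" using card_of_Un_ordLess_infinite[OF infK] A(2) M1(2) unfolding small_def by blast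
    moreover have "|UNIV :: ('f + 'r + nat) set| <o |K|"
      using card_of_Plus_ordLess_infinite[OF infK fK card_of_Plus_ordLess_infinite[OF infK rK True]]
      by simp
    ultimately have LK: "|L| <o |K|" unfolding L_def using card_of_Plus_ordLess_infinite[OF infK] by blast
    have fL: "|UNIV :: 'f set| \<le>o |L|"
      by (rule inj_le[of "\<lambda>f. Inr (Inl f)"]) (auto simp: L_def inj_on_def)
    have rL: "|UNIV :: 'r set| \<le>o |L|"
      by (rule inj_le[of "\<lambda>r. Inr (Inr (Inl r))"]) (auto simp: L_def inj_on_def)
    have B0L: "|A \<union> M1| \<le>o |L|"
      by (rule inj_le[of Inl]) (auto simp: L_def)
    obtain M' where M': "A \<union> M1 \<subseteq> M'" "elem_sub M' S" "|M'| \<le>o |L|"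
      using LS[OF wf Linf fL rL _ _ B0L] A(1) M1U by blast
    have sM': "small K M'" unfolding small_def using ordLeq_ordLess_trans[OF M'(3) LK] .
    have fsM': "fin_sat_in S n M' \<mu>" using M1(3) M'(1) unfolding fin_sat_in_def by blast
    have "fin_sat_in S m M' \<nu>" using core[OF M'(2) _ A(3) mu fsM'] M'(1) by blast
    then show ?thesis unfolding fin_sat_def using M'(2) sM' by blast
  next
    case False
    then have "|K| \<le>o |UNIV :: nat set|"
      using not_ordLess_iff_ordLeq[OF card_of_Well_order card_of_Well_order] by blast
    then have "|M1| <o |UNIV :: nat set|" using M1(2) unfolding small_def using ordLess_ordLeq_trans by blast
    then have "finite M1" using infinite_iff_card_of_nat not_ordLess_ordLeq by blast
    then have "univ S \<subseteq> M1" using finite_elem_univ[OF M1(1)] by blast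
    then have "fin_sat_in S m M1 \<nu>" using fs_empty_nu[OF nu] by blast
    then show ?thesis unfolding fin_sat_def using M1 by blast
  qed
qed

end

theorem theorem4p12:
  fixes K :: "'k set"
    and S :: "('a, 'f, 'r) struc"
    and M :: "'a set"
    and n m :: nat
    and \<mu> \<nu> :: "'a list set \<Rightarrow> real"
  assumes "monster K S"
    and "elem_sub M S" and "small K M"
    and "keisler S n (univ S) \<mu>" and "keisler S m (univ S) \<nu>"
  shows "(fin_sat_in S n M \<mu> \<and> edom_at S n m M \<mu> \<nu> \<longrightarrow> fin_sat_in S m M \<nu>) \<and>
         (fin_sat K S n \<mu> \<and> edom K S n m \<mu> \<nu> \<longrightarrow> fin_sat K S m \<nu>)"
proof (intro conjI impI)
  assume "fin_sat_in S n M \<mu> \<and> edom_at S n m M \<mu> \<nu>"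
  then show "fin_sat_in S m M \<nu>" using core[OF assms(2) subset_refl _ assms(4)] by blast
next
  assume "fin_sat K S n \<mu> \<and> edom K S n m \<mu> \<nu>"
  then show "fin_sat K S m \<nu>" using part2[OF assms(1,4,5)] by blast
qed


end
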